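(* Let $\mathcal{M}$ be the association scheme generated by the Möbius–Kantor graph $GP(8,3)$ (a rank-$6$ scheme), with distinguished relation $R_1$ the edge relation of $GP(8,3)$. Then every association scheme with a distinguished relation having the same relation-distribution diagram as $(\mathcal{M},R_1)$ is isomorphic to $\mathcal{M}$ (with the distinguished relation corresponding to $R_1$).
   Context: A (symmetric) association scheme with rank $d+1$ on a finite set $X$ is a partition $\mathcal{R}=\{R_0,\dots,R_d\}$ of $X\times X$ with $R_0$ the diagonal, each $R_i$ symmetric, and numbers $p^h_{ij}$ such that for every $(x,y)\in R_h$ the number of $z$ with $(x,z)\in R_i$, $(z,y)\in R_j$ equals $p^h_{ij}$; $k_i=p^0_{ii}$. The association scheme generated by a graph is the association scheme of minimal rank having the graph's edge relation as a relation. Two schemes with distinguished relations $R_1$, $R'_1$ have the same relation-distribution diagram if they have the same rank and there is a bijection $\sigma$ of the index set with $\sigma(0)=0$, $\sigma(1)=1$, $k_i=k'_{\sigma(i)}$ and $p^i_{1j}=p'^{\sigma(i)}_{1\sigma(j)}$ for all $i,j$. The generalized Petersen graph $GP(n,s)$ has vertices $i$ and $i^*$ for $i\in\mathbb{Z}_n$, with $i$ adjacent to $i\pm1$ and $i^*$, and $i^*$ adjacent to $(i\pm s)^*$. *)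

theory Defs
  imports Main
begin

text \<open>A symmetric association scheme of rank d+1 on a finite set X is encoded by a
  relation-index function r: (x,y) lies in R_i iff r x y = i (for x y in X).\<close>

definition assoc_scheme :: "'a set \<Rightarrow> nat \<Rightarrow> ('a \<Rightarrow> 'a \<Rightarrow> nat) \<Rightarrow> bool" where
  "assoc_scheme X d r \<longleftrightarrow>
     finite X \<and>
     (\<forall>x\<in>X. \<forall>y\<in>X. r x y \<le> d) \<and>
     (\<forall>i\<le>d. \<exists>x\<in>X. \<exists>y\<in>X. r x y = i) \<and>
     (\<forall>x\<in>X. \<forall>y\<in>X. r x y = 0 \<longleftrightarrow> x = y) \<and>
     (\<forall>x\<in>X. \<forall>y\<in>X. r x y = r y x) \<and>
     (\<forall>h\<le>d. \<forall>i\<le>d. \<forall>j\<le>d. \<forall>x\<in>X. \<forall>y\<in>X. \<forall>x'\<in>X. \<forall>y'\<in>X.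
        r x y = h \<longrightarrow> r x' y' = h \<longrightarrow>
        card {z\<in>X. r x z = i \<and> r z y = j} = card {z\<in>X. r x' z = i \<and> r z y' = j})"

definition inter_num :: "'a set \<Rightarrow> ('a \<Rightarrow> 'a \<Rightarrow> nat) \<Rightarrow> nat \<Rightarrow> nat \<Rightarrow> nat \<Rightarrow> nat" where
  "inter_num X r h i j =
     (let p = (SOME p. p \<in> X \<times> X \<and> r (fst p) (snd p) = h)
      in card {z\<in>X. r (fst p) z = i \<and> r z (snd p) = j})"

definition valency :: "'a set \<Rightarrow> ('a \<Rightarrow> 'a \<Rightarrow> nat) \<Rightarrow> nat \<Rightarrow> nat" where
  "valency X r i = inter_num X r 0 i i"

definition same_rd_diagram ::
  "'a set \<Rightarrow> nat \<Rightarrow> ('a \<Rightarrow> 'a \<Rightarrow> nat) \<Rightarrow> 'b set \<Rightarrow> nat \<Rightarrow> ('b \<Rightarrow> 'b \<Rightarrow> nat) \<Rightarrow> bool" where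
  "same_rd_diagram X d r Y d' r' \<longleftrightarrow>
     d = d' \<and>
     (\<exists>\<sigma>. bij_betw \<sigma> {0..d} {0..d} \<and> \<sigma> 0 = 0 \<and> \<sigma> 1 = 1 \<and>
        (\<forall>i\<le>d. valency X r i = valency Y r' (\<sigma> i)) \<and>
        (\<forall>i\<le>d. \<forall>j\<le>d. inter_num X r i 1 j = inter_num Y r' (\<sigma> i) 1 (\<sigma> j)))"

definition scheme_iso ::
  "'a set \<Rightarrow> nat \<Rightarrow> ('a \<Rightarrow> 'a \<Rightarrow> nat) \<Rightarrow> 'b set \<Rightarrow> nat \<Rightarrow> ('b \<Rightarrow> 'b \<Rightarrow> nat) \<Rightarrow> bool" where
  "scheme_iso X d r Y d' r' \<longleftrightarrow>
     (\<exists>f \<tau>. bij_betw f X Y \<and> bij_betw \<tau> {0..d} {0..d'} \<and> \<tau> 1 = 1 \<and>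
        (\<forall>x\<in>X. \<forall>y\<in>X. r' (f x) (f y) = \<tau> (r x y)))"

text \<open>Generalized Petersen graph GP(n,s) on vertex set {0..<2n}:
  vertex i (i < n) is i, vertex i* is n + i.\<close>
definition gp_vertices :: "nat \<Rightarrow> nat set" where
  "gp_vertices n = {0..<2*n}"

definition gp_adj :: "nat \<Rightarrow> nat \<Rightarrow> nat \<Rightarrow> nat \<Rightarrow> bool" where
  "gp_adj n s u v \<longleftrightarrow>
     (u < n \<and> v < n \<and> (v = (u + 1) mod n \<or> u = (v + 1) mod n)) \<or>
     (u < n \<and> v = n + u) \<or> (v < n \<and> u = n + v) \<or>
     (n \<le> u \<and> u < 2*n \<and> n \<le> v \<and> v < 2*n \<and>
        (v - n = (u - n + s) mod n \<or> u - n = (v - n + s) mod n))"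

definition generated_scheme :: "'a set \<Rightarrow> ('a \<Rightarrow> 'a \<Rightarrow> bool) \<Rightarrow> nat \<Rightarrow> ('a \<Rightarrow> 'a \<Rightarrow> nat) \<Rightarrow> bool" where
  "generated_scheme X E d r \<longleftrightarrow>
     assoc_scheme X d r \<and> 1 \<le> d \<and>
     (\<forall>x\<in>X. \<forall>y\<in>X. r x y = 1 \<longleftrightarrow> E x y) \<and>
     (\<forall>d'' r''. assoc_scheme X d'' r'' \<and>
        (\<exists>i\<le>d''. \<forall>x\<in>X. \<forall>y\<in>X. r'' x y = i \<longleftrightarrow> E x y) \<longrightarrow> d \<le> d'')"

end

theory Submission
  imports Defs
begin

definition oo :: "nat \<Rightarrow> nat" where "oo k = (if k=0 then 0 else if k=1 \<or> k=7 then 1 else if k=2 \<or> k=6 then 2 else if k=3 \<or> k=5 then 4 else 5)"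
definition oi :: "nat \<Rightarrow> nat" where "oi k = (if k=0 then 1 else if k=2 \<or> k=6 then 3 else if k=4 then 4 else 2)"
definition ii :: "nat \<Rightarrow> nat" where "ii k = (if k=0 then 0 else if k=1 \<or> k=7 then 4 else if k=2 \<or> k=6 then 2 else if k=3 \<or> k=5 then 1 else 5)"
definition r0 :: "nat \<Rightarrow> nat \<Rightarrow> nat" where
 "r0 x y = (if x<8 then (if y<8 then oo ((y+8-x) mod 8) else oi ((y+8-x) mod 8))
            else (if y<8 then oi ((x+8-y) mod 8) else ii ((y+8-x) mod 8)))"

lemma upt16: "[0..<16] = [0,1,2,3,4,5,6,7,8,9,10,11,12,13,14,15::nat]"
  by (simp add: upt_rec)
lemma upt6: "[0..<6] = [0,1,2,3,4,5::nat]"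
  by (simp add: upt_rec)

lemma ball16: "(\<forall>x<(16::nat). Q x) \<longleftrightarrow> list_all Q [0..<16]"
  by (auto simp: list_all_iff)
lemma ball6: "(\<forall>x\<le>(5::nat). Q x) \<longleftrightarrow> list_all Q [0..<6]"
  by (auto simp: list_all_iff)

lemma cardX: "card {z\<in>{0..<16::nat}. Q z} = length (filter Q [0..<16])"
proof -
  have "{z\<in>{0..<16::nat}. Q z} = set (filter Q [0..<16])" by auto
  moreover have "card (set (filter Q [0..<16])) = length (filter Q [0..<(16::nat)])"
    by (rule distinct_card) simp
  ultimately show ?thesis by simp
qed

definition C :: "nat \<Rightarrow> nat \<Rightarrow> nat \<Rightarrow> nat \<Rightarrow> nat" where
  "C x y i j = card {z\<in>{0..<16}. r0 x z = i \<and> r0 z y = j}"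

definition wrep :: "nat \<Rightarrow> nat" where
  "wrep h = (if h=0 then 0 else if h=1 then 1 else if h=2 then 2 else if h=3 then 10 else if h=4 then 3 else 4)"

definition P :: "nat \<Rightarrow> nat \<Rightarrow> nat \<Rightarrow> nat" where "P h i j = C 0 (wrep h) i j"

definition Good :: "nat \<Rightarrow> bool" where
  "Good x \<longleftrightarrow> (\<forall>y<16. \<forall>i\<le>5. \<forall>j\<le>5. C x y i j = P (r0 x y) i j)"

definition Cc :: "nat \<Rightarrow> nat \<Rightarrow> nat \<Rightarrow> nat \<Rightarrow> nat" where
  "Cc x y i j = length (filter (\<lambda>z. r0 x z = i \<and> r0 z y = j) [0,1,2,3,4,5,6,7,8,9,10,11,12,13,14,15])"
lemma C_Cc: "C x y i j = Cc x y i j"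
  unfolding C_def Cc_def cardX upt16 ..


definition rot :: "nat \<Rightarrow> nat" where "rot x = (if x < 8 then (x+1) mod 8 else (x+1) mod 8 + 8)"
definition swp :: "nat \<Rightarrow> nat" where "swp x = (if x < 8 then 8 + (3*x) mod 8 else (3*(x-8)) mod 8)"
lemma r0_vals [simp]:
  "r0 0 0 = 0"
  "r0 0 1 = 1"
  "r0 0 (Suc 0) = 1"
  "r0 0 2 = 2"
  "r0 0 3 = 4"
  "r0 0 4 = 5"
  "r0 0 5 = 4"
  "r0 0 6 = 2"
  "r0 0 7 = 1"
  "r0 0 8 = 1"
  "r0 0 9 = 2"
  "r0 0 10 = 3"
  "r0 0 11 = 2"
  "r0 0 12 = 4"
  "r0 0 13 = 2"
  "r0 0 14 = 3"
  "r0 0 15 = 2"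
  "r0 1 0 = 1"
  "r0 1 1 = 0"
  "r0 1 (Suc 0) = 0"
  "r0 1 2 = 1"
  "r0 1 3 = 2"
  "r0 1 4 = 4"
  "r0 1 5 = 5"
  "r0 1 6 = 4"
  "r0 1 7 = 2"
  "r0 1 8 = 2"
  "r0 1 9 = 1"
  "r0 1 10 = 2"
  "r0 1 11 = 3"
  "r0 1 12 = 2"
  "r0 1 13 = 4"
  "r0 1 14 = 2"
  "r0 1 15 = 3"
  "r0 (Suc 0) 0 = 1"
  "r0 (Suc 0) 1 = 0"
  "r0 (Suc 0) (Suc 0) = 0"
  "r0 (Suc 0) 2 = 1"
  "r0 (Suc 0) 3 = 2"
  "r0 (Suc 0) 4 = 4"
  "r0 (Suc 0) 5 = 5"
  "r0 (Suc 0) 6 = 4"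
  "r0 (Suc 0) 7 = 2"
  "r0 (Suc 0) 8 = 2"
  "r0 (Suc 0) 9 = 1"
  "r0 (Suc 0) 10 = 2"
  "r0 (Suc 0) 11 = 3"
  "r0 (Suc 0) 12 = 2"
  "r0 (Suc 0) 13 = 4"
  "r0 (Suc 0) 14 = 2"
  "r0 (Suc 0) 15 = 3"
  "r0 2 0 = 2"
  "r0 2 1 = 1"
  "r0 2 (Suc 0) = 1"
  "r0 2 2 = 0"
  "r0 2 3 = 1"
  "r0 2 4 = 2"
  "r0 2 5 = 4"
  "r0 2 6 = 5"
  "r0 2 7 = 4"
  "r0 2 8 = 3"
  "r0 2 9 = 2"
  "r0 2 10 = 1"
  "r0 2 11 = 2"
  "r0 2 12 = 3"
  "r0 2 13 = 2"
  "r0 2 14 = 4"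
  "r0 2 15 = 2"
  "r0 3 0 = 4"
  "r0 3 1 = 2"
  "r0 3 (Suc 0) = 2"
  "r0 3 2 = 1"
  "r0 3 3 = 0"
  "r0 3 4 = 1"
  "r0 3 5 = 2"
  "r0 3 6 = 4"
  "r0 3 7 = 5"
  "r0 3 8 = 2"
  "r0 3 9 = 3"
  "r0 3 10 = 2"
  "r0 3 11 = 1"
  "r0 3 12 = 2"
  "r0 3 13 = 3"
  "r0 3 14 = 2"
  "r0 3 15 = 4"
  "r0 4 0 = 5"
  "r0 4 1 = 4"
  "r0 4 (Suc 0) = 4"
  "r0 4 2 = 2"
  "r0 4 3 = 1"
  "r0 4 4 = 0"
  "r0 4 5 = 1"
  "r0 4 6 = 2"
  "r0 4 7 = 4"
  "r0 4 8 = 4"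
  "r0 4 9 = 2"
  "r0 4 10 = 3"
  "r0 4 11 = 2"
  "r0 4 12 = 1"
  "r0 4 13 = 2"
  "r0 4 14 = 3"
  "r0 4 15 = 2"
  "r0 5 0 = 4"
  "r0 5 1 = 5"
  "r0 5 (Suc 0) = 5"
  "r0 5 2 = 4"
  "r0 5 3 = 2"
  "r0 5 4 = 1"
  "r0 5 5 = 0"
  "r0 5 6 = 1"
  "r0 5 7 = 2"
  "r0 5 8 = 2"
  "r0 5 9 = 4"
  "r0 5 10 = 2"
  "r0 5 11 = 3"
  "r0 5 12 = 2"
  "r0 5 13 = 1"
  "r0 5 14 = 2"
  "r0 5 15 = 3"
  "r0 6 0 = 2"
  "r0 6 1 = 4"
  "r0 6 (Suc 0) = 4"
  "r0 6 2 = 5"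
  "r0 6 3 = 4"
  "r0 6 4 = 2"
  "r0 6 5 = 1"
  "r0 6 6 = 0"
  "r0 6 7 = 1"
  "r0 6 8 = 3"
  "r0 6 9 = 2"
  "r0 6 10 = 4"
  "r0 6 11 = 2"
  "r0 6 12 = 3"
  "r0 6 13 = 2"
  "r0 6 14 = 1"
  "r0 6 15 = 2"
  "r0 7 0 = 1"
  "r0 7 1 = 2"
  "r0 7 (Suc 0) = 2"
  "r0 7 2 = 4"
  "r0 7 3 = 5"
  "r0 7 4 = 4"
  "r0 7 5 = 2"
  "r0 7 6 = 1"
  "r0 7 7 = 0"
  "r0 7 8 = 2"
  "r0 7 9 = 3"
  "r0 7 10 = 2"
  "r0 7 11 = 4"
  "r0 7 12 = 2"
  "r0 7 13 = 3"
  "r0 7 14 = 2"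
  "r0 7 15 = 1"
  "r0 8 0 = 1"
  "r0 8 1 = 2"
  "r0 8 (Suc 0) = 2"
  "r0 8 2 = 3"
  "r0 8 3 = 2"
  "r0 8 4 = 4"
  "r0 8 5 = 2"
  "r0 8 6 = 3"
  "r0 8 7 = 2"
  "r0 8 8 = 0"
  "r0 8 9 = 4"
  "r0 8 10 = 2"
  "r0 8 11 = 1"
  "r0 8 12 = 5"
  "r0 8 13 = 1"
  "r0 8 14 = 2"
  "r0 8 15 = 4"
  "r0 9 0 = 2"
  "r0 9 1 = 1"
  "r0 9 (Suc 0) = 1"
  "r0 9 2 = 2"
  "r0 9 3 = 3"
  "r0 9 4 = 2"
  "r0 9 5 = 4"
  "r0 9 6 = 2"
  "r0 9 7 = 3"
  "r0 9 8 = 4"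
  "r0 9 9 = 0"
  "r0 9 10 = 4"
  "r0 9 11 = 2"
  "r0 9 12 = 1"
  "r0 9 13 = 5"
  "r0 9 14 = 1"
  "r0 9 15 = 2"
  "r0 10 0 = 3"
  "r0 10 1 = 2"
  "r0 10 (Suc 0) = 2"
  "r0 10 2 = 1"
  "r0 10 3 = 2"
  "r0 10 4 = 3"
  "r0 10 5 = 2"
  "r0 10 6 = 4"
  "r0 10 7 = 2"
  "r0 10 8 = 2"
  "r0 10 9 = 4"
  "r0 10 10 = 0"
  "r0 10 11 = 4"
  "r0 10 12 = 2"
  "r0 10 13 = 1"
  "r0 10 14 = 5"
  "r0 10 15 = 1"
  "r0 11 0 = 2"
  "r0 11 1 = 3"
  "r0 11 (Suc 0) = 3"
  "r0 11 2 = 2"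
  "r0 11 3 = 1"
  "r0 11 4 = 2"
  "r0 11 5 = 3"
  "r0 11 6 = 2"
  "r0 11 7 = 4"
  "r0 11 8 = 1"
  "r0 11 9 = 2"
  "r0 11 10 = 4"
  "r0 11 11 = 0"
  "r0 11 12 = 4"
  "r0 11 13 = 2"
  "r0 11 14 = 1"
  "r0 11 15 = 5"
  "r0 12 0 = 4"
  "r0 12 1 = 2"
  "r0 12 (Suc 0) = 2"
  "r0 12 2 = 3"
  "r0 12 3 = 2"
  "r0 12 4 = 1"
  "r0 12 5 = 2"
  "r0 12 6 = 3"
  "r0 12 7 = 2"
  "r0 12 8 = 5"
  "r0 12 9 = 1"
  "r0 12 10 = 2"
  "r0 12 11 = 4"
  "r0 12 12 = 0"
  "r0 12 13 = 4"
  "r0 12 14 = 2"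
  "r0 12 15 = 1"
  "r0 13 0 = 2"
  "r0 13 1 = 4"
  "r0 13 (Suc 0) = 4"
  "r0 13 2 = 2"
  "r0 13 3 = 3"
  "r0 13 4 = 2"
  "r0 13 5 = 1"
  "r0 13 6 = 2"
  "r0 13 7 = 3"
  "r0 13 8 = 1"
  "r0 13 9 = 5"
  "r0 13 10 = 1"
  "r0 13 11 = 2"
  "r0 13 12 = 4"
  "r0 13 13 = 0"
  "r0 13 14 = 4"
  "r0 13 15 = 2"
  "r0 14 0 = 3"
  "r0 14 1 = 2"
  "r0 14 (Suc 0) = 2"
  "r0 14 2 = 4"
  "r0 14 3 = 2"
  "r0 14 4 = 3"
  "r0 14 5 = 2"
  "r0 14 6 = 1"
  "r0 14 7 = 2"
  "r0 14 8 = 2"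
  "r0 14 9 = 1"
  "r0 14 10 = 5"
  "r0 14 11 = 1"
  "r0 14 12 = 2"
  "r0 14 13 = 4"
  "r0 14 14 = 0"
  "r0 14 15 = 4"
  "r0 15 0 = 2"
  "r0 15 1 = 3"
  "r0 15 (Suc 0) = 3"
  "r0 15 2 = 2"
  "r0 15 3 = 4"
  "r0 15 4 = 2"
  "r0 15 5 = 3"
  "r0 15 6 = 2"
  "r0 15 7 = 1"
  "r0 15 8 = 4"
  "r0 15 9 = 2"
  "r0 15 10 = 1"
  "r0 15 11 = 5"
  "r0 15 12 = 1"
  "r0 15 13 = 2"
  "r0 15 14 = 4"
  "r0 15 15 = 0"
  by (simp_all add: r0_def oo_def oi_def ii_def)

lemma rot_vals [simp]:
  "rot 0 = 1"
  "rot 1 = 2"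
  "rot (Suc 0) = 2"
  "rot 2 = 3"
  "rot 3 = 4"
  "rot 4 = 5"
  "rot 5 = 6"
  "rot 6 = 7"
  "rot 7 = 0"
  "rot 8 = 9"
  "rot 9 = 10"
  "rot 10 = 11"
  "rot 11 = 12"
  "rot 12 = 13"
  "rot 13 = 14"
  "rot 14 = 15"
  "rot 15 = 8"
  by (simp_all add: rot_def)


lemma swp_vals [simp]:
  "swp 0 = 8"
  "swp 1 = 11"
  "swp (Suc 0) = 11"
  "swp 2 = 14"
  "swp 3 = 9"
  "swp 4 = 12"
  "swp 5 = 15"
  "swp 6 = 10"
  "swp 7 = 13"
  "swp 8 = 0"
  "swp 9 = 3"
  "swp 10 = 6"
  "swp 11 = 1"
  "swp 12 = 4"
  "swp 13 = 7"
  "swp 14 = 2"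
  "swp 15 = 5"
  by (simp_all add: swp_def)



lemma wrep_vals [simp]: "wrep 0 = 0" "wrep 1 = 1" "wrep (Suc 0) = 1" "wrep 2 = 2" "wrep 3 = 10" "wrep 4 = 3" "wrep 5 = 4"
  by (simp_all add: wrep_def)

lemma X_def: "gp_vertices 8 = {0..<16}" by (simp add: gp_vertices_def)

lemma r0_basic: "\<forall>x<16. \<forall>y<16. r0 x y \<le> 5 \<and> (r0 x y = 0 \<longleftrightarrow> x = y) \<and> r0 x y = r0 y x
   \<and> (r0 x y = 1 \<longleftrightarrow> gp_adj 8 3 x y)"
  unfolding ball16 apply (simp only: upt16 list.pred_inject) by (simp add: gp_adj_def)

lemma r0_bnd: assumes "x < 16" "y < 16" shows "r0 x y \<le> 5" using r0_basic[rule_format, OF assms] by (elim conjE)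
lemma r0_0: assumes "x < 16" "y < 16" shows "r0 x y = 0 \<longleftrightarrow> x = y" using r0_basic[rule_format, OF assms] by (elim conjE)
lemma r0_sym: assumes "x < 16" "y < 16" shows "r0 x y = r0 y x" using r0_basic[rule_format, OF assms] by (elim conjE)
lemma r0_adj: assumes "x < 16" "y < 16" shows "r0 x y = 1 \<longleftrightarrow> gp_adj 8 3 x y" using r0_basic[rule_format, OF assms] by (elim conjE)

lemma wrep_ok: "h \<le> 5 \<Longrightarrow> wrep h < 16 \<and> r0 0 (wrep h) = h"
proof -
  assume "h \<le> 5"
  hence "h = 0 \<or> h = 1 \<or> h = 2 \<or> h = 3 \<or> h = 4 \<or> h = 5" by auto
  thus ?thesis by auto
qed

lemma rot_aut: "\<forall>x<16. \<forall>y<16. r0 (rot x) (rot y) = r0 x y \<and> (rot x = rot y \<longrightarrow> x = y)"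
  unfolding ball16 apply (simp only: upt16 list.pred_inject) by simp
lemma swp_aut: "\<forall>x<16. \<forall>y<16. r0 (swp x) (swp y) = r0 x y \<and> (swp x = swp y \<longrightarrow> x = y)"
  unfolding ball16 apply (simp only: upt16 list.pred_inject) by simp
lemma rot_lt: "\<forall>x<16. rot x < 16"
  unfolding ball16 apply (simp only: upt16 list.pred_inject) by simp
lemma swp_lt: "\<forall>x<16. swp x < 16"
  unfolding ball16 apply (simp only: upt16 list.pred_inject) by simp

lemma spec_lt: "\<forall>x<(16::nat). Q x \<Longrightarrow> x < 16 \<Longrightarrow> Q x" by blast
lemma spec2_lt: "\<forall>x<(16::nat). \<forall>y<(16::nat). Q x y \<Longrightarrow> x < 16 \<Longrightarrow> y < 16 \<Longrightarrow> Q x y" by blast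

definition is_aut :: "(nat \<Rightarrow> nat) \<Rightarrow> bool" where
  "is_aut \<phi> \<longleftrightarrow> (\<forall>x<16. \<phi> x < 16) \<and> (\<forall>x<16. \<forall>y<16. r0 (\<phi> x) (\<phi> y) = r0 x y \<and> (\<phi> x = \<phi> y \<longrightarrow> x = y))"

lemma rot_is_aut: "is_aut rot" unfolding is_aut_def using rot_lt rot_aut by (rule conjI)
lemma swp_is_aut: "is_aut swp" unfolding is_aut_def using swp_lt swp_aut by (rule conjI)

lemma aut_image: assumes "is_aut \<phi>" shows "\<phi> ` {0..<16} = {0..<16}" "inj_on \<phi> {0..<16}"
proof -
  have a: "\<And>x. x < 16 \<Longrightarrow> \<phi> x < 16" using assms unfolding is_aut_def by (elim conjE) (rule spec_lt)
  have b: "\<And>x y. x < 16 \<Longrightarrow> y < 16 \<Longrightarrow> \<phi> x = \<phi> y \<Longrightarrow> x = y"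
    using assms unfolding is_aut_def by (elim conjE) (drule spec2_lt, assumption+, elim conjE, simp)
  show inj: "inj_on \<phi> {0..<16}" unfolding inj_on_def using b by simp
  have "\<phi> ` {0..<16} \<subseteq> {0..<16}" using a by auto
  thus "\<phi> ` {0..<16} = {0..<16}" using inj by (simp add: endo_inj_surj)
qed

lemma aut_C: assumes "is_aut \<phi>" "x < 16" "y < 16"
  shows "C (\<phi> x) (\<phi> y) i j = C x y i j"
proof -
  have im: "\<phi> ` {0..<16} = {0..<16}" and inj: "inj_on \<phi> {0..<16}" using aut_image[OF assms(1)] by auto
  have r: "\<And>u v. u < 16 \<Longrightarrow> v < 16 \<Longrightarrow> r0 (\<phi> u) (\<phi> v) = r0 u v" using assms(1) unfolding is_aut_def
    by (elim conjE) (drule spec2_lt, assumption+, elim conjE)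
  let ?S = "{z\<in>{0..<16}. r0 x z = i \<and> r0 z y = j}"
  have "{z\<in>{0..<16}. r0 (\<phi> x) z = i \<and> r0 z (\<phi> y) = j} = \<phi> ` ?S"
  proof
    show "\<phi> ` ?S \<subseteq> {z\<in>{0..<16}. r0 (\<phi> x) z = i \<and> r0 z (\<phi> y) = j}"
      using r assms im by auto
  next
    show "{z\<in>{0..<16}. r0 (\<phi> x) z = i \<and> r0 z (\<phi> y) = j} \<subseteq> \<phi> ` ?S"
    proof
      fix z assume z: "z \<in> {z\<in>{0..<16}. r0 (\<phi> x) z = i \<and> r0 z (\<phi> y) = j}"
      then obtain w where w: "w < 16" "z = \<phi> w" using im by (metis (no_types, lifting) atLeastLessThan_iff imageE mem_Collect_eq)
      thus "z \<in> \<phi> ` ?S" using z r assms by auto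
    qed
  qed
  moreover have "inj_on \<phi> ?S" using inj by (rule inj_on_subset) auto
  ultimately show ?thesis unfolding C_def by (simp add: card_image)
qed

lemma Good_aut: assumes "Good x" "x < 16" "is_aut \<phi>" shows "Good (\<phi> x)"
  unfolding Good_def
proof (intro allI impI)
  fix y i j :: nat assume y: "y < 16" and ij: "i \<le> 5" "j \<le> 5"
  have im: "\<phi> ` {0..<16} = {0..<16}" using aut_image[OF assms(3)] by simp
  have "y \<in> \<phi> ` {0..<16}" using im y by simp
  then obtain y' where y'0: "y' \<in> {0..<16}" and y'1: "y = \<phi> y'" by (rule imageE)
  have y'lt: "y' < 16" using y'0 by simp
  have r: "r0 (\<phi> x) (\<phi> y') = r0 x y'" using assms(3) unfolding is_aut_def
    using spec2_lt[of "\<lambda>u v. r0 (\<phi> u) (\<phi> v) = r0 u v \<and> (\<phi> u = \<phi> v \<longrightarrow> u = v)", OF _ assms(2) y'lt] by blast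
  have g: "\<forall>y<16. \<forall>i\<le>5. \<forall>j\<le>5. C x y i j = P (r0 x y) i j" using assms(1) by (simp only: Good_def)
  have "C (\<phi> x) (\<phi> y') i j = C x y' i j" by (rule aut_C[OF assms(3) assms(2) y'lt])
  also have "\<dots> = P (r0 x y') i j" using g[rule_format, OF y'lt ij] .
  also have "\<dots> = P (r0 (\<phi> x) (\<phi> y')) i j" using r by simp
  finally show "C (\<phi> x) y i j = P (r0 (\<phi> x) y) i j" unfolding y'1 .
qed

lemma Good0: "Good 0"
  unfolding Good_def ball16 ball6 P_def C_Cc
  apply (simp only: upt16 upt6 list.pred_inject)
  apply (simp add: Cc_def)
  done

lemma Good_all: "x < 16 \<Longrightarrow> Good x"
proof -
  have g1: "Good 1" using Good_aut[OF Good0 _ rot_is_aut] by simp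
  have g2: "Good 2" using Good_aut[OF g1 _ rot_is_aut] by simp
  have g3: "Good 3" using Good_aut[OF g2 _ rot_is_aut] by simp
  have g4: "Good 4" using Good_aut[OF g3 _ rot_is_aut] by simp
  have g5: "Good 5" using Good_aut[OF g4 _ rot_is_aut] by simp
  have g6: "Good 6" using Good_aut[OF g5 _ rot_is_aut] by simp
  have g7: "Good 7" using Good_aut[OF g6 _ rot_is_aut] by simp
  have g8: "Good 8" using Good_aut[OF Good0 _ swp_is_aut] by simp
  have g9: "Good 9" using Good_aut[OF g8 _ rot_is_aut] by simp
  have g10: "Good 10" using Good_aut[OF g9 _ rot_is_aut] by simp
  have g11: "Good 11" using Good_aut[OF g10 _ rot_is_aut] by simp
  have g12: "Good 12" using Good_aut[OF g11 _ rot_is_aut] by simp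
  have g13: "Good 13" using Good_aut[OF g12 _ rot_is_aut] by simp
  have g14: "Good 14" using Good_aut[OF g13 _ rot_is_aut] by simp
  have g15: "Good 15" using Good_aut[OF g14 _ rot_is_aut] by simp
  have "\<forall>x<16. Good x" unfolding ball16 apply (simp only: upt16 list.pred_inject)
    using Good0 g1 g2 g3 g4 g5 g6 g7 g8 g9 g10 g11 g12 g13 g14 g15 by simp
  thus "x < 16 \<Longrightarrow> Good x" by blast
qed

lemma C_P: "x < 16 \<Longrightarrow> y < 16 \<Longrightarrow> i \<le> 5 \<Longrightarrow> j \<le> 5 \<Longrightarrow> C x y i j = P (r0 x y) i j"
  using Good_all unfolding Good_def by simp

definition Tt :: "nat \<Rightarrow> nat \<Rightarrow> nat" where
  "Tt h j = (if h = 0 then (if j = 1 then 3 else 0)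
    else if h = 1 then (if j = 0 then 1 else if j = 2 then 2 else 0)
    else if h = 2 then (if j = 1 \<or> j = 3 \<or> j = 4 then 1 else 0)
    else if h = 3 then (if j = 2 then 3 else 0)
    else if h = 4 then (if j = 2 then 2 else if j = 5 then 1 else 0)
    else if h = 5 then (if j = 4 then 3 else 0) else 0)"

definition Kt :: "nat \<Rightarrow> nat" where
  "Kt k = (if k=0 then 1 else if k=1 then 3 else if k=2 then 6 else if k=3 then 2 else if k=4 then 3 else if k = 5 then 1 else 0)"

lemma T_P_all: "\<forall>h\<le>5. \<forall>j\<le>5. P h 1 j = Tt h j"
  unfolding ball6 P_def C_Cc
  apply (simp only: upt6 list.pred_inject)
  apply (simp add: Cc_def Tt_def)
  done

lemma K_P_all: "\<forall>k\<le>5. P 0 k k = Kt k"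
  unfolding ball6 P_def C_Cc
  apply (simp only: upt6 list.pred_inject)
  apply (simp add: Cc_def Kt_def)
  done

lemma C_T: "x < 16 \<Longrightarrow> y < 16 \<Longrightarrow> j \<le> 5 \<Longrightarrow> C x y 1 j = Tt (r0 x y) j"
  using C_P[of x y 1 j] T_P_all r0_bnd[of x y] by simp

lemma C_K: "x < 16 \<Longrightarrow> k \<le> 5 \<Longrightarrow> C x x k k = Kt k"
  using C_P[of x x k k] K_P_all r0_0[of x x] by simp

lemma r0_scheme: "assoc_scheme (gp_vertices 8) 5 r0"
  unfolding assoc_scheme_def X_def
proof (intro conjI ballI allI impI)
  show "finite {0..<16::nat}" by simp
next
  fix x y assume "x \<in> {0..<16::nat}" "y \<in> {0..<16::nat}"
  thus "r0 x y \<le> 5" "r0 x y = 0 \<longleftrightarrow> x = y" "r0 x y = r0 y x" using r0_bnd r0_0 r0_sym by auto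
next
  fix i :: nat assume "i \<le> 5"
  thus "\<exists>x\<in>{0..<16}. \<exists>y\<in>{0..<16}. r0 x y = i" using wrep_ok[of i] by force
next
  fix h i j :: nat and x y x' y' :: nat assume h: "h \<le> 5" "i \<le> 5" "j \<le> 5" and xy: "x \<in> {0..<16::nat}" "y \<in> {0..<16::nat}"
    "x' \<in> {0..<16::nat}" "y' \<in> {0..<16::nat}" and "r0 x y = h" "r0 x' y' = h"
  thus "card {z \<in> {0..<16}. r0 x z = i \<and> r0 z y = j} = card {z \<in> {0..<16}. r0 x' z = i \<and> r0 z y' = j}"
    using C_P[of x y i j] C_P[of x' y' i j] unfolding C_def by simp
qed



section \<open>Part B: any scheme on X with R_1 = E factors through r0\<close>

lemma scheme_props0:
  assumes "assoc_scheme Y d s"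
  shows "finite Y" "\<forall>x\<in>Y. \<forall>y\<in>Y. s x y \<le> d"
    "\<forall>i\<le>d. \<exists>x\<in>Y. \<exists>y\<in>Y. s x y = i"
    "\<forall>x\<in>Y. \<forall>y\<in>Y. s x y = 0 \<longleftrightarrow> x = y"
    "\<forall>x\<in>Y. \<forall>y\<in>Y. s x y = s y x"
    "\<forall>h\<le>d. \<forall>i\<le>d. \<forall>j\<le>d. \<forall>x\<in>Y. \<forall>y\<in>Y. \<forall>x'\<in>Y. \<forall>y'\<in>Y.
        s x y = h \<longrightarrow> s x' y' = h \<longrightarrow>
        card {z\<in>Y. s x z = i \<and> s z y = j} = card {z\<in>Y. s x' z = i \<and> s z y' = j}"
  using assms unfolding assoc_scheme_def apply -
  apply (elim conjE, assumption)+
  done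

lemma scheme_props:
  assumes "assoc_scheme Y d s"
  shows "finite Y" "\<And>x y. x \<in> Y \<Longrightarrow> y \<in> Y \<Longrightarrow> s x y \<le> d"
    "\<And>i. i \<le> d \<Longrightarrow> \<exists>x\<in>Y. \<exists>y\<in>Y. s x y = i"
    "\<And>x y. x \<in> Y \<Longrightarrow> y \<in> Y \<Longrightarrow> s x y = 0 \<longleftrightarrow> x = y"
    "\<And>x y. x \<in> Y \<Longrightarrow> y \<in> Y \<Longrightarrow> s x y = s y x"
    "\<And>h i j x y x' y'. h \<le> d \<Longrightarrow> i \<le> d \<Longrightarrow> j \<le> d \<Longrightarrow> x \<in> Y \<Longrightarrow> y \<in> Y \<Longrightarrow> x' \<in> Y \<Longrightarrow> y' \<in> Y \<Longrightarrow>
       s x y = h \<Longrightarrow> s x' y' = h \<Longrightarrow>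
       card {z\<in>Y. s x z = i \<and> s z y = j} = card {z\<in>Y. s x' z = i \<and> s z y' = j}"
  by (rule scheme_props0[OF assms]) (rule scheme_props0[OF assms, rule_format]; assumption)+

lemma scheme_card_eq:
  assumes "assoc_scheme Y d s" "x \<in> Y" "y \<in> Y" "x' \<in> Y" "y' \<in> Y" "s x y = s x' y'"
  shows "card {z\<in>Y. s x z = i \<and> s z y = j} = card {z\<in>Y. s x' z = i \<and> s z y' = j}"
proof (cases "i \<le> d \<and> j \<le> d")
  case True
  show ?thesis
    by (rule scheme_props(6)[OF assms(1), of "s x y" i j]) (use True assms scheme_props(2)[OF assms(1)] in auto)
next
  case False
  have e1: "{z\<in>Y. s x z = i \<and> s z y = j} = {}" and e2: "{z\<in>Y. s x' z = i \<and> s z y' = j} = {}"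
    using False assms scheme_props(2)[OF assms(1)] by fastforce+
  show ?thesis unfolding e1 e2 ..
qed

lemma transfer:
  assumes "assoc_scheme Y d s" "x \<in> Y" "y \<in> Y" "x' \<in> Y" "y' \<in> Y" "s x y = s x' y'" "z \<in> Y"
  shows "\<exists>z'\<in>Y. s x' z' = s x z \<and> s z' y' = s z y"
proof -
  have fin: "finite Y" using scheme_props(1)[OF assms(1)] .
  have eq: "card {w\<in>Y. s x w = s x z \<and> s w y = s z y} = card {w\<in>Y. s x' w = s x z \<and> s w y' = s z y}"
    by (rule scheme_card_eq[OF assms(1-6)])
  have "z \<in> {w\<in>Y. s x w = s x z \<and> s w y = s z y}" using assms(7) by simp
  hence "card {w\<in>Y. s x w = s x z \<and> s w y = s z y} > 0" using fin by (auto simp: card_gt_0_iff)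
  hence "{w\<in>Y. s x' w = s x z \<and> s w y' = s z y} \<noteq> {}" using eq by (metis card.empty less_irrefl)
  thus ?thesis by blast
qed

definition inv_s :: "'a set \<Rightarrow> ('a \<Rightarrow> 'a \<Rightarrow> nat) \<Rightarrow> ('a \<Rightarrow> 'a \<Rightarrow> bool) \<Rightarrow> bool" where
  "inv_s Y s Q \<longleftrightarrow> (\<forall>x\<in>Y. \<forall>y\<in>Y. \<forall>x'\<in>Y. \<forall>y'\<in>Y. s x y = s x' y' \<longrightarrow> (Q x y \<longleftrightarrow> Q x' y'))"

lemma inv_sD: "inv_s Y s Q \<Longrightarrow> x \<in> Y \<Longrightarrow> y \<in> Y \<Longrightarrow> x' \<in> Y \<Longrightarrow> y' \<in> Y \<Longrightarrow> s x y = s x' y' \<Longrightarrow> Q x y \<Longrightarrow> Q x' y'"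
  unfolding inv_s_def by blast

lemma inv_sI: "(\<And>x y x' y'. x \<in> Y \<Longrightarrow> y \<in> Y \<Longrightarrow> x' \<in> Y \<Longrightarrow> y' \<in> Y \<Longrightarrow> s x y = s x' y' \<Longrightarrow> Q x y \<Longrightarrow> Q x' y') \<Longrightarrow> inv_s Y s Q"
  unfolding inv_s_def by metis

lemma inv_step:
  assumes sch: "assoc_scheme Y d s" and inv: "inv_s Y s Q"
  shows "inv_s Y s (\<lambda>x y. \<exists>z\<in>Y. s x z = 1 \<and> Q z y)"
proof (rule inv_sI)
  fix x y x' y' assume xy: "x \<in> Y" "y \<in> Y" "x' \<in> Y" "y' \<in> Y" "s x y = s x' y'" and "\<exists>z\<in>Y. s x z = 1 \<and> Q z y"
  then obtain z where z: "z \<in> Y" "s x z = 1" "Q z y" by blast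
  obtain z' where z': "z' \<in> Y" "s x' z' = s x z" "s z' y' = s z y" using transfer[OF sch xy z(1)] by blast
  have "Q z' y'" by (rule inv_sD[OF inv z(1) xy(2) z'(1) xy(4) z'(3)[symmetric] z(3)])
  thus "\<exists>z\<in>Y. s x' z = 1 \<and> Q z y'" using z' z by auto
qed

lemma inv_cong: "inv_s Y s Q \<Longrightarrow> (\<And>x y. x \<in> Y \<Longrightarrow> y \<in> Y \<Longrightarrow> Q x y \<longleftrightarrow> Q' x y) \<Longrightarrow> inv_s Y s Q'"
  unfolding inv_s_def by metis

lemma inv_diff: "inv_s Y s Q \<Longrightarrow> inv_s Y s Q' \<Longrightarrow> inv_s Y s (\<lambda>x y. Q x y \<and> \<not> Q' x y)"
  unfolding inv_s_def by metis

lemma ex_r0_step: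
  assumes "x < 16" "y < 16" "J \<subseteq> {..5}"
  shows "(\<exists>z\<in>{0..<16}. r0 x z = 1 \<and> r0 z y \<in> J) \<longleftrightarrow> (\<exists>j\<in>J. Tt (r0 x y) j > 0)"
proof
  assume "\<exists>z\<in>{0..<16}. r0 x z = 1 \<and> r0 z y \<in> J"
  then obtain z where z: "z < 16" "r0 x z = 1" "r0 z y \<in> J" by auto
  let ?j = "r0 z y"
  have j5: "?j \<le> 5" using z assms by auto
  have "z \<in> {w\<in>{0..<16}. r0 x w = 1 \<and> r0 w y = ?j}" using z by simp
  hence "C x y 1 ?j > 0" unfolding C_def by (auto simp: card_gt_0_iff)
  thus "\<exists>j\<in>J. Tt (r0 x y) j > 0" using C_T[OF assms(1,2) j5] z(3) by auto
next
  assume "\<exists>j\<in>J. Tt (r0 x y) j > 0"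
  then obtain j where j: "j \<in> J" "Tt (r0 x y) j > 0" by blast
  have j5: "j \<le> 5" using j assms by auto
  have "C x y 1 j > 0" using C_T[OF assms(1,2) j5] j by simp
  hence "{w\<in>{0..<16}. r0 x w = 1 \<and> r0 w y = j} \<noteq> {}" unfolding C_def by (metis card.empty less_irrefl)
  thus "\<exists>z\<in>{0..<16}. r0 x z = 1 \<and> r0 z y \<in> J" using j by blast
qed

lemma r0_cases: "x < 16 \<Longrightarrow> y < 16 \<Longrightarrow> r0 x y = 0 \<or> r0 x y = 1 \<or> r0 x y = 2 \<or> r0 x y = 3 \<or> r0 x y = 4 \<or> r0 x y = 5"
  using r0_bnd[of x y] by linarith

lemma factor_r0:
  assumes sch: "assoc_scheme (gp_vertices 8) d s"
    and adj: "\<forall>x\<in>gp_vertices 8. \<forall>y\<in>gp_vertices 8. s x y = 1 \<longleftrightarrow> gp_adj 8 3 x y"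
  shows "\<forall>x\<in>gp_vertices 8. \<forall>y\<in>gp_vertices 8. \<forall>x'\<in>gp_vertices 8. \<forall>y'\<in>gp_vertices 8.
           s x y = s x' y' \<longrightarrow> r0 x y = r0 x' y'"
proof -
  let ?X = "gp_vertices 8"
  have X: "?X = {0..<16}" by (rule X_def)
  have s1: "\<And>x y. x \<in> ?X \<Longrightarrow> y \<in> ?X \<Longrightarrow> s x y = 1 \<longleftrightarrow> r0 x y = 1"
    using adj r0_adj unfolding X by auto
  have step: "\<And>J J'. inv_s ?X s (\<lambda>x y. r0 x y \<in> J) \<Longrightarrow> J \<subseteq> {..5} \<Longrightarrow>
      (\<And>h. h \<le> 5 \<Longrightarrow> (\<exists>j\<in>J. Tt h j > 0) \<longleftrightarrow> h \<in> J') \<Longrightarrow> inv_s ?X s (\<lambda>x y. r0 x y \<in> J')"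
  proof -
    fix J J' assume iJ: "inv_s ?X s (\<lambda>x y. r0 x y \<in> J)" and J5: "J \<subseteq> {..5}"
      and JJ: "\<And>h. h \<le> 5 \<Longrightarrow> (\<exists>j\<in>J. Tt h j > 0) \<longleftrightarrow> h \<in> J'"
    have i1: "inv_s ?X s (\<lambda>x y. \<exists>z\<in>?X. s x z = 1 \<and> r0 z y \<in> J)" by (rule inv_step[OF sch iJ])
    show "inv_s ?X s (\<lambda>x y. r0 x y \<in> J')"
    proof (rule inv_cong[OF i1])
      fix x y assume xy: "x \<in> ?X" "y \<in> ?X"
      have "(\<exists>z\<in>?X. s x z = 1 \<and> r0 z y \<in> J) \<longleftrightarrow> (\<exists>z\<in>{0..<16}. r0 x z = 1 \<and> r0 z y \<in> J)"
        using s1 xy unfolding X by auto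
      also have "\<dots> \<longleftrightarrow> (\<exists>j\<in>J. Tt (r0 x y) j > 0)" using ex_r0_step[OF _ _ J5] xy unfolding X by auto
      also have "\<dots> \<longleftrightarrow> r0 x y \<in> J'" using JJ[of "r0 x y"] r0_bnd xy unfolding X by auto
      finally show "(\<exists>z\<in>?X. s x z = 1 \<and> r0 z y \<in> J) \<longleftrightarrow> r0 x y \<in> J'" .
    qed
  qed
  have i0: "inv_s ?X s (\<lambda>x y. r0 x y \<in> {0})"
  proof (rule inv_sI)
    fix x y x' y' assume "x \<in> ?X" "y \<in> ?X" "x' \<in> ?X" "y' \<in> ?X" "s x y = s x' y'" "r0 x y \<in> {0}"
    hence "x = y" using r0_0 unfolding X by auto
    hence "s x' y' = 0" using \<open>s x y = s x' y'\<close> scheme_props(4)[OF sch] \<open>x \<in> ?X\<close> by (metis)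
    hence "x' = y'" using scheme_props(4)[OF sch] \<open>x' \<in> ?X\<close> \<open>y' \<in> ?X\<close> by blast
    thus "r0 x' y' \<in> {0}" using r0_0 \<open>x' \<in> ?X\<close> unfolding X by auto
  qed
  have i1: "inv_s ?X s (\<lambda>x y. r0 x y \<in> {1})"
  proof (rule inv_sI)
    fix x y x' y' assume "x \<in> ?X" "y \<in> ?X" "x' \<in> ?X" "y' \<in> ?X" "s x y = s x' y'" "r0 x y \<in> {1}"
    have "r0 x y = 1" using \<open>r0 x y \<in> {1}\<close> by simp
    hence "s x y = 1" using s1[OF \<open>x \<in> ?X\<close> \<open>y \<in> ?X\<close>] by simp
    hence "s x' y' = 1" using \<open>s x y = s x' y'\<close> by simp
    hence "r0 x' y' = 1" using s1[OF \<open>x' \<in> ?X\<close> \<open>y' \<in> ?X\<close>] by simp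
    thus "r0 x' y' \<in> {1}" by simp
  qed
  have i02: "inv_s ?X s (\<lambda>x y. r0 x y \<in> {0,2})"
    by (rule step[OF i1]) (auto simp: Tt_def)
  have i2: "inv_s ?X s (\<lambda>x y. r0 x y \<in> {2})"
    by (rule inv_cong[OF inv_diff[OF i02 i0]]) auto
  have i134: "inv_s ?X s (\<lambda>x y. r0 x y \<in> {1,3,4})"
    by (rule step[OF i2]) (auto simp: Tt_def)
  have i34: "inv_s ?X s (\<lambda>x y. r0 x y \<in> {3,4})"
    by (rule inv_cong[OF inv_diff[OF i134 i1]]) auto
  have i25: "inv_s ?X s (\<lambda>x y. r0 x y \<in> {2,5})"
    by (rule step[OF i34]) (auto simp: Tt_def)
  have i5: "inv_s ?X s (\<lambda>x y. r0 x y \<in> {5})"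
    by (rule inv_cong[OF inv_diff[OF i25 i2]]) auto
  have i4: "inv_s ?X s (\<lambda>x y. r0 x y \<in> {4})"
    by (rule step[OF i5]) (auto simp: Tt_def)
  have i3: "inv_s ?X s (\<lambda>x y. r0 x y \<in> {3})"
    by (rule inv_cong[OF inv_diff[OF i34 i4]]) auto
  show ?thesis
  proof (intro ballI impI)
    fix x y x' y' assume xy: "x \<in> ?X" "y \<in> ?X" "x' \<in> ?X" "y' \<in> ?X" and e: "s x y = s x' y'"
    have "r0 x y \<in> {0} \<or> r0 x y \<in> {1} \<or> r0 x y \<in> {2} \<or> r0 x y \<in> {3} \<or> r0 x y \<in> {4} \<or> r0 x y \<in> {5}"
      using r0_cases xy unfolding X by auto
    thus "r0 x y = r0 x' y'"
      using inv_sD[OF i0 xy e] inv_sD[OF i1 xy e] inv_sD[OF i2 xy e] inv_sD[OF i3 xy e]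
        inv_sD[OF i4 xy e] inv_sD[OF i5 xy e] by auto
  qed
qed

lemma factor_r0_bij:
  assumes sch: "assoc_scheme (gp_vertices 8) d s" and d5: "d \<le> 5"
    and adj: "\<forall>x\<in>gp_vertices 8. \<forall>y\<in>gp_vertices 8. s x y = 1 \<longleftrightarrow> gp_adj 8 3 x y"
  shows "d = 5 \<and> (\<exists>g. bij_betw g {0..5} {0..5} \<and> g 0 = 0 \<and> g 1 = 1 \<and>
            (\<forall>x\<in>gp_vertices 8. \<forall>y\<in>gp_vertices 8. r0 x y = g (s x y)))"
proof -
  let ?X = "gp_vertices 8"
  have X: "?X = {0..<16}" by (rule X_def)
  have fac: "\<And>x y x' y'. x \<in> ?X \<Longrightarrow> y \<in> ?X \<Longrightarrow> x' \<in> ?X \<Longrightarrow> y' \<in> ?X \<Longrightarrow> s x y = s x' y' \<Longrightarrow> r0 x y = r0 x' y'"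
    using factor_r0[OF sch adj] by blast
  define g where "g j = (SOME h. \<exists>x\<in>?X. \<exists>y\<in>?X. s x y = j \<and> r0 x y = h)" for j
  have gxy: "r0 x y = g (s x y)" if xy: "x \<in> ?X" "y \<in> ?X" for x y
  proof -
    have "\<exists>h. \<exists>x'\<in>?X. \<exists>y'\<in>?X. s x' y' = s x y \<and> r0 x' y' = h" using xy by blast
    hence "\<exists>x'\<in>?X. \<exists>y'\<in>?X. s x' y' = s x y \<and> r0 x' y' = g (s x y)"
      unfolding g_def by (rule someI_ex)
    then obtain x' y' where "x' \<in> ?X" "y' \<in> ?X" "s x' y' = s x y" "r0 x' y' = g (s x y)" by blast
    thus ?thesis using fac[of x' y' x y] xy by simp
  qed
  have im: "g ` {0..d} = {0..5}"
  proof
    show "g ` {0..d} \<subseteq> {0..5}"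
    proof
      fix h assume "h \<in> g ` {0..d}"
      then obtain j where j: "j \<le> d" "h = g j" by auto
      obtain x y where "x \<in> ?X" "y \<in> ?X" "s x y = j" using scheme_props(3)[OF sch j(1)] by blast
      thus "h \<in> {0..5}" using gxy j r0_bnd unfolding X by fastforce
    qed
  next
    show "{0..5} \<subseteq> g ` {0..d}"
    proof
      fix h assume "h \<in> {0..(5::nat)}"
      hence w: "wrep h < 16" "r0 0 (wrep h) = h" using wrep_ok by auto
      have "h = g (s 0 (wrep h))" using gxy[of 0 "wrep h"] w unfolding X by simp
      moreover have "s 0 (wrep h) \<le> d" using scheme_props(2)[OF sch, of 0 "wrep h"] w unfolding X by simp
      ultimately show "h \<in> g ` {0..d}" by auto
    qed
  qed
  have "card (g ` {0..d}) \<le> card {0..d}" by (rule card_image_le) simp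
  hence "6 \<le> d + 1" using im by simp
  hence d: "d = 5" using d5 by simp
  have bij: "bij_betw g {0..5} {0..5}"
    unfolding bij_betw_def using im d by (auto intro: eq_card_imp_inj_on)
  have g0: "g 0 = 0" using gxy[of 0 0] scheme_props(4)[OF sch, of 0 0] unfolding X by simp
  have g1: "g 1 = 1"
  proof -
    have "gp_adj 8 3 0 1" by (simp add: gp_adj_def)
    hence "s 0 1 = 1" using adj unfolding X by simp
    thus ?thesis using gxy[of 0 1] unfolding X by simp
  qed
  show ?thesis using d bij g0 g1 gxy by blast
qed


section \<open>Part C: reconstruction of the graph from the diagram\<close>

lemma card_sub_eq: "card S = n \<Longrightarrow> 0 < n \<Longrightarrow> T \<subseteq> S \<Longrightarrow> card T = n \<Longrightarrow> T = S"
  by (metis card_subset_eq card_gt_0_iff)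

lemma card_other: "card S = n \<Longrightarrow> 0 < n \<Longrightarrow> finite T \<Longrightarrow> card T < n \<Longrightarrow> \<exists>x\<in>S. x \<notin> T"
proof (rule ccontr)
  assume "card S = n" "0 < n" "finite T" "card T < n" "\<not> (\<exists>x\<in>S. x \<notin> T)"
  hence "S \<subseteq> T" by blast
  hence "card S \<le> card T" using \<open>finite T\<close> by (rule card_mono[rotated])
  thus False using \<open>card S = n\<close> \<open>card T < n\<close> by simp
qed

lemma card1_eq: "card S = 1 \<Longrightarrow> a \<in> S \<Longrightarrow> b \<in> S \<Longrightarrow> a = b"
  by (metis card_1_singletonE singletonD)

lemma card_ex: "card S = n \<Longrightarrow> 0 < n \<Longrightarrow> \<exists>x. x \<in> S"
  by (metis card.empty ex_in_conv less_irrefl)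

lemma two_elems: "card S = 2 \<Longrightarrow> a \<in> S \<Longrightarrow> b \<in> S \<Longrightarrow> a \<noteq> b \<Longrightarrow> x \<in> S \<Longrightarrow> x = a \<or> x = b"
proof -
  assume h: "card S = 2" "a \<in> S" "b \<in> S" "a \<noteq> b" "x \<in> S"
  have "{a, b} = S" by (rule card_sub_eq[OF h(1)]) (use h in auto)
  thus ?thesis using h(5) by auto
qed

lemma three_elems: "card S = 3 \<Longrightarrow> a \<in> S \<Longrightarrow> b \<in> S \<Longrightarrow> d \<in> S \<Longrightarrow> a \<noteq> b \<Longrightarrow> a \<noteq> d \<Longrightarrow> b \<noteq> d
   \<Longrightarrow> x \<in> S \<Longrightarrow> x = a \<or> x = b \<or> x = d"
proof -
  assume h: "card S = 3" "a \<in> S" "b \<in> S" "d \<in> S" "a \<noteq> b" "a \<noteq> d" "b \<noteq> d" "x \<in> S"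
  have "{a, b, d} = S" by (rule card_sub_eq[OF h(1)]) (use h in auto)
  thus ?thesis using h(8) by auto
qed

lemma other1: "card S = 2 \<Longrightarrow> a \<in> S \<Longrightarrow> \<exists>b\<in>S. b \<noteq> a"
  using card_other[of S 2 "{a}"] by auto

lemma other2: "card S = 3 \<Longrightarrow> a \<noteq> b \<Longrightarrow> \<exists>d\<in>S. d \<noteq> a \<and> d \<noteq> b"
  using card_other[of S 3 "{a,b}"] by auto

locale Ysch =
  fixes Y :: "'b set" and c :: "'b \<Rightarrow> 'b \<Rightarrow> nat" and y0 :: 'b
  assumes fin: "finite Y" and y0: "y0 \<in> Y"
    and bnd: "\<And>u v. u \<in> Y \<Longrightarrow> v \<in> Y \<Longrightarrow> c u v \<le> 5"
    and c0: "\<And>u v. u \<in> Y \<Longrightarrow> v \<in> Y \<Longrightarrow> c u v = 0 \<longleftrightarrow> u = v"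
    and csym: "\<And>u v. u \<in> Y \<Longrightarrow> v \<in> Y \<Longrightarrow> c u v = c v u"
    and cnt: "\<And>u v j. u \<in> Y \<Longrightarrow> v \<in> Y \<Longrightarrow> j \<le> 5 \<Longrightarrow> card {z\<in>Y. c u z = 1 \<and> c z v = j} = Tt (c u v) j"
    and val: "\<And>k. k \<le> 5 \<Longrightarrow> card {z\<in>Y. c y0 z = k} = Kt k"
begin

definition Nl :: "'b \<Rightarrow> nat \<Rightarrow> 'b set" where "Nl u j = {z\<in>Y. c u z = 1 \<and> c z y0 = j}"

lemma Nl_card: "u \<in> Y \<Longrightarrow> j \<le> 5 \<Longrightarrow> card (Nl u j) = Tt (c u y0) j"
  unfolding Nl_def using cnt y0 by simp

lemma Nl_mem: "z \<in> Nl u j \<longleftrightarrow> z \<in> Y \<and> c u z = 1 \<and> c z y0 = j"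
  unfolding Nl_def by simp

lemma nb_pos: assumes "u \<in> Y" "v \<in> Y" "z \<in> Y" "c u z = 1" shows "Tt (c u v) (c z v) > 0"
proof -
  have "z \<in> {w\<in>Y. c u w = 1 \<and> c w v = c z v}" using assms by simp
  hence "card {w\<in>Y. c u w = 1 \<and> c w v = c z v} > 0" using fin by (auto simp: card_gt_0_iff)
  thus ?thesis using cnt[OF assms(1,2) bnd[OF assms(3,2)]] by simp
qed

lemma CN: assumes "u \<in> Y" "v \<in> Y" "w1 \<in> Y" "w2 \<in> Y" "u \<noteq> v"
  "c u w1 = 1" "c w1 v = 1" "c u w2 = 1" "c w2 v = 1"
  shows "w1 = w2"
proof -
  have "c w1 u = 1" using assms csym by metis
  hence "Tt (c w1 v) (c u v) > 0" using nb_pos[OF assms(3) assms(2) assms(1)] by simp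
  hence "Tt 1 (c u v) > 0" using assms(7) by simp
  hence "c u v = 0 \<or> c u v = 2" by (simp add: Tt_def split: if_splits)
  hence c2: "c u v = 2" using c0[OF assms(1,2)] assms(5) by auto
  have "card {z\<in>Y. c u z = 1 \<and> c z v = 1} = 1" using cnt[OF assms(1,2), of 1] c2 by (simp add: Tt_def)
  thus ?thesis by (rule card1_eq) (use assms in auto)
qed

lemma uniq: assumes "u \<in> Y" "j \<le> 5" "Tt (c u y0) j = 1" "a \<in> Nl u j" "b \<in> Nl u j" shows "a = b"
  using card1_eq[OF _ assms(4,5)] Nl_card[OF assms(1,2)] assms(3) by simp

lemma Nl_Y: "z \<in> Nl u j \<Longrightarrow> z \<in> Y" unfolding Nl_def by simp

lemma lev_nb: assumes "u \<in> Y" "z \<in> Y" "c u z = 1" shows "Tt (c u y0) (c z y0) > 0"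
  using nb_pos[OF assms(1) y0 assms(2,3)] .

lemma deg3: "u \<in> Y \<Longrightarrow> card {z\<in>Y. c u z = 1} = 3"
proof -
  assume u: "u \<in> Y"
  have "{z\<in>Y. c u z = 1} = {z\<in>Y. c u z = 1 \<and> c z u = 1}" using csym u by auto
  thus ?thesis using cnt[OF u u, of 1] c0[OF u u] by (simp add: Tt_def)
qed

end


lemma card2_ex: "card S = 2 \<Longrightarrow> \<exists>a b. a \<in> S \<and> b \<in> S \<and> a \<noteq> b"
  by (auto simp: card_2_iff)

context Ysch begin

lemma uniq': assumes "u \<in> Y" "c u y0 = h" "j \<le> 5" "Tt h j = 1" "a \<in> Y" "b \<in> Y"
  "c u a = 1" "c u b = 1" "c a y0 = j" "c b y0 = j" shows "a = b"
  by (rule uniq[OF assms(1,3)]) (use assms in \<open>auto simp: Nl_mem\<close>)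

lemma get_nb: assumes "u \<in> Y" "c u y0 = h" "j \<le> 5" "Tt h j > 0"
  obtains z where "z \<in> Y" "c u z = 1" "c z y0 = j"
proof -
  have "card (Nl u j) = Tt h j" using Nl_card[OF assms(1,3)] assms(2) by simp
  then obtain z where "z \<in> Nl u j" using card_ex assms(4) by blast
  thus ?thesis using that by (auto simp: Nl_mem)
qed

lemma neq_lev: "c a y0 \<noteq> c b y0 \<Longrightarrow> a \<noteq> b" by auto

lemma par_neq: assumes "a \<in> Y" "c a y0 = 2" "p \<in> Y" "q \<in> Y" "c p a = 1" "c q b = 1" "c p y0 = 1" "c q y0 = 1" "p \<noteq> q"
  shows "a \<noteq> b"
proof
  assume ab: "a = b"
  have "c a p = 1" "c a q = 1" using assms ab csym by metis+
  hence "p = q" using uniq'[OF assms(1,2), of 1 p q] assms by (simp add: Tt_def)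
  thus False using assms(9) by simp
qed

lemma lev3_uniq: assumes "a \<in> Y" "c a y0 = 2" "t1 \<in> Y" "t2 \<in> Y" "c a t1 = 1" "c a t2 = 1" "c t1 y0 = 3" "c t2 y0 = 3"
  shows "t1 = t2"
  using uniq'[OF assms(1,2), of 3 t1 t2] assms by (simp add: Tt_def)

lemma lev4_uniq: assumes "a \<in> Y" "c a y0 = 2" "t1 \<in> Y" "t2 \<in> Y" "c a t1 = 1" "c a t2 = 1" "c t1 y0 = 4" "c t2 y0 = 4"
  shows "t1 = t2"
  using uniq'[OF assms(1,2), of 4 t1 t2] assms by (simp add: Tt_def)

lemma sy: "u \<in> Y \<Longrightarrow> v \<in> Y \<Longrightarrow> c u v = 1 \<Longrightarrow> c v u = 1" using csym by metis

lemma Lk_card: "k \<le> 5 \<Longrightarrow> card {z\<in>Y. c z y0 = k} = Kt k"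
proof -
  assume k: "k \<le> 5"
  have "{z\<in>Y. c z y0 = k} = {z\<in>Y. c y0 z = k}" using csym y0 by auto
  thus ?thesis using val[OF k] by simp
qed

lemma card_Y: "card Y = 16"
proof -
  have Y: "Y = (\<Union>k\<in>{0,1,2,3,4,5::nat}. {z\<in>Y. c z y0 = k})"
  proof
    show "Y \<subseteq> (\<Union>k\<in>{0,1,2,3,4,5::nat}. {z\<in>Y. c z y0 = k})"
    proof
      fix z assume z: "z \<in> Y"
      have "c z y0 \<le> 5" using bnd[OF z y0] .
      hence "c z y0 \<in> {0,1,2,3,4,5}" by auto
      thus "z \<in> (\<Union>k\<in>{0,1,2,3,4,5::nat}. {z\<in>Y. c z y0 = k})" using z by blast
    qed
  qed auto
  have "card (\<Union>k\<in>{0,1,2,3,4,5::nat}. {z\<in>Y. c z y0 = k}) = (\<Sum>k\<in>{0,1,2,3,4,5::nat}. card {z\<in>Y. c z y0 = k})"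
    by (rule card_UN_disjoint) (use fin in auto)
  also have "\<dots> = (\<Sum>k\<in>{0,1,2,3,4,5::nat}. Kt k)"
    by (rule sum.cong) (auto simp: Lk_card)
  also have "\<dots> = 16" by (simp add: Kt_def)
  finally show ?thesis using Y by simp
qed

end


context Ysch begin

lemma construct:
  obtains v1 v2 v3 v4 v5 v6 v7 v8 v9 v10 v11 v12 v13 v14 v15 where
   "v1 \<in> Y" "v2 \<in> Y" "v3 \<in> Y" "v4 \<in> Y" "v5 \<in> Y" "v6 \<in> Y" "v7 \<in> Y" "v8 \<in> Y"
   "v9 \<in> Y" "v10 \<in> Y" "v11 \<in> Y" "v12 \<in> Y" "v13 \<in> Y" "v14 \<in> Y" "v15 \<in> Y"
   "c v1 y0 = 1" "c v7 y0 = 1" "c v8 y0 = 1"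
   "c v2 y0 = 2" "c v9 y0 = 2" "c v11 y0 = 2" "c v13 y0 = 2" "c v15 y0 = 2" "c v6 y0 = 2"
   "c v10 y0 = 3" "c v14 y0 = 3" "c v3 y0 = 4" "c v12 y0 = 4" "c v5 y0 = 4" "c v4 y0 = 5"
   "v1 \<noteq> v8" "v1 \<noteq> v7" "v7 \<noteq> v8" "v2 \<noteq> v9" "v11 \<noteq> v13" "v15 \<noteq> v6" "v10 \<noteq> v14"
   "v3 \<noteq> v12" "v3 \<noteq> v5" "v12 \<noteq> v5"
   "c y0 v1 = 1" "c v1 v2 = 1" "c v2 v3 = 1" "c v3 v4 = 1" "c v4 v5 = 1" "c v5 v6 = 1" "c v6 v7 = 1" "c v7 y0 = 1"
   "c y0 v8 = 1" "c v1 v9 = 1" "c v2 v10 = 1" "c v3 v11 = 1" "c v4 v12 = 1" "c v5 v13 = 1" "c v6 v14 = 1" "c v7 v15 = 1"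
   "c v8 v11 = 1" "c v9 v12 = 1" "c v10 v13 = 1" "c v11 v14 = 1" "c v12 v15 = 1" "c v13 v8 = 1" "c v14 v9 = 1" "c v15 v10 = 1"
proof -
  have l0: "c y0 y0 = 0" using c0 y0 by simp
  have N0card: "card (Nl y0 1) = 3" using Nl_card[OF y0, of 1] l0 by (simp add: Tt_def)
  obtain v1 where v1: "v1 \<in> Nl y0 1" using card_ex[OF N0card] by auto
  have Y1: "v1 \<in> Y" and e01: "c y0 v1 = 1" and l1: "c v1 y0 = 1" using v1 by (auto simp: Nl_mem)
  have N1card: "card (Nl v1 2) = 2" using Nl_card[OF Y1, of 2] l1 by (simp add: Tt_def)
  then obtain v2 v9 where v2: "v2 \<in> Nl v1 2" and v9: "v9 \<in> Nl v1 2" and n29: "v2 \<noteq> v9"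
    using card2_ex by blast
  have Y2: "v2 \<in> Y" and e12: "c v1 v2 = 1" and l2: "c v2 y0 = 2" using v2 by (auto simp: Nl_mem)
  have Y9: "v9 \<in> Y" and e19: "c v1 v9 = 1" and l9: "c v9 y0 = 2" using v9 by (auto simp: Nl_mem)
  obtain v10 where Y10: "v10 \<in> Y" and e2_10: "c v2 v10 = 1" and l10: "c v10 y0 = 3"
    using get_nb[OF Y2 l2, of 3] by (auto simp: Tt_def)
  obtain v3 where Y3: "v3 \<in> Y" and e23: "c v2 v3 = 1" and l3: "c v3 y0 = 4"
    using get_nb[OF Y2 l2, of 4] by (auto simp: Tt_def)
  have N3card: "card (Nl v3 2) = 2" using Nl_card[OF Y3, of 2] l3 by (simp add: Tt_def)
  have v2N3: "v2 \<in> Nl v3 2" using Y2 l2 sy[OF Y2 Y3 e23] by (simp add: Nl_mem)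
  obtain v11 where v11: "v11 \<in> Nl v3 2" and n2_11: "v11 \<noteq> v2" using other1[OF N3card v2N3] by blast
  have Y11: "v11 \<in> Y" and e3_11: "c v3 v11 = 1" and l11: "c v11 y0 = 2" using v11 by (auto simp: Nl_mem)
  obtain v8 where Y8: "v8 \<in> Y" and e11_8: "c v11 v8 = 1" and l8: "c v8 y0 = 1"
    using get_nb[OF Y11 l11, of 1] by (auto simp: Tt_def)
  have n18: "v1 \<noteq> v8"
  proof
    assume h: "v1 = v8"
    have "v11 \<in> Nl v1 2" using h sy[OF Y11 Y8 e11_8] Y11 l11 by (simp add: Nl_mem)
    hence "v11 = v2 \<or> v11 = v9" by (rule two_elems[OF N1card v2 v9 n29])
    hence "v11 = v9" using n2_11 by simp
    hence "v1 = v3" using CN[OF Y2 Y9 Y1 Y3 n29 sy[OF Y1 Y2 e12] e19 e23] e3_11 by simp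
    thus False using l1 l3 by simp
  qed
  have v1N0: "v1 \<in> Nl y0 1" by (rule v1)
  have v8N0: "v8 \<in> Nl y0 1" using Y8 l8 sy[OF Y8 y0] by (simp add: Nl_mem)
  obtain v7 where v7: "v7 \<in> Nl y0 1" and n17: "v7 \<noteq> v1" and n78: "v7 \<noteq> v8"
    using other2[OF N0card n18] by blast
  have Y7: "v7 \<in> Y" and e07: "c y0 v7 = 1" and l7: "c v7 y0 = 1" using v7 by (auto simp: Nl_mem)
  have N0: "\<And>z. z \<in> Y \<Longrightarrow> c z y0 = 1 \<Longrightarrow> z = v1 \<or> z = v8 \<or> z = v7"
  proof -
    fix z assume z: "z \<in> Y" "c z y0 = 1"
    hence "z \<in> Nl y0 1" using sy[OF z(1) y0] by (simp add: Nl_mem)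
    thus "z = v1 \<or> z = v8 \<or> z = v7" by (rule three_elems[OF N0card v1N0 v8N0 v7 n18 n17[symmetric] n78[symmetric]])
  qed
  obtain v14 where Y14: "v14 \<in> Y" and e11_14: "c v11 v14 = 1" and l14: "c v14 y0 = 3"
    using get_nb[OF Y11 l11, of 3] by (auto simp: Tt_def)
  have n10_14: "v10 \<noteq> v14"
  proof
    assume h: "v10 = v14"
    have "v3 = v10" using CN[OF Y2 Y11 Y3 Y10 n2_11[symmetric] e23 e3_11 e2_10] sy[OF Y11 Y14 e11_14] h by simp
    thus False using l3 l10 by simp
  qed
  have L3: "\<And>t. t \<in> Y \<Longrightarrow> c t y0 = 3 \<Longrightarrow> t = v10 \<or> t = v14"
  proof -
    fix t assume t: "t \<in> Y" "c t y0 = 3"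
    have K: "card {z\<in>Y. c z y0 = 3} = 2" using Lk_card[of 3] by (simp add: Kt_def)
    show "t = v10 \<or> t = v14" by (rule two_elems[OF K _ _ n10_14]) (use t Y10 Y14 l10 l14 in auto)
  qed
  have N8card: "card (Nl v8 2) = 2" using Nl_card[OF Y8, of 2] l8 by (simp add: Tt_def)
  have v11N8: "v11 \<in> Nl v8 2" using Y11 l11 sy[OF Y11 Y8 e11_8] by (simp add: Nl_mem)
  obtain v13 where v13: "v13 \<in> Nl v8 2" and n11_13: "v13 \<noteq> v11" using other1[OF N8card v11N8] by blast
  have Y13: "v13 \<in> Y" and e8_13: "c v8 v13 = 1" and l13: "c v13 y0 = 2" using v13 by (auto simp: Nl_mem)
  have e13_10: "c v13 v10 = 1"
  proof -
    obtain t where t: "t \<in> Y" "c v13 t = 1" "c t y0 = 3" using get_nb[OF Y13 l13, of 3] by (auto simp: Tt_def)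
    have "t \<noteq> v14"
    proof
      assume "t = v14"
      hence "v8 = v14" using CN[OF Y11 Y13 Y8 Y14 n11_13[symmetric] e11_8 e8_13 e11_14] sy[OF Y13 t(1) t(2)] by simp
      thus False using l8 l14 by simp
    qed
    hence "t = v10" using L3[OF t(1,3)] by simp
    thus ?thesis using t by simp
  qed
  have e9_14: "c v9 v14 = 1"
  proof -
    obtain t where t: "t \<in> Y" "c v9 t = 1" "c t y0 = 3" using get_nb[OF Y9 l9, of 3] by (auto simp: Tt_def)
    have "t \<noteq> v10"
    proof
      assume "t = v10"
      hence "v1 = v10" using CN[OF Y2 Y9 Y1 Y10 n29 sy[OF Y1 Y2 e12] e19 e2_10] sy[OF Y9 t(1) t(2)] by simp
      thus False using l1 l10 by simp
    qed
    hence "t = v14" using L3[OF t(1,3)] by simp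
    thus ?thesis using t by simp
  qed
  have n2_13: "v2 \<noteq> v13" by (rule par_neq[OF Y2 l2 Y1 Y8 e12 e8_13 l1 l8 n18])
  have N10card: "card (Nl v10 2) = 3" using Nl_card[OF Y10, of 2] l10 by (simp add: Tt_def)
  have v2N10: "v2 \<in> Nl v10 2" using Y2 l2 sy[OF Y2 Y10 e2_10] by (simp add: Nl_mem)
  have v13N10: "v13 \<in> Nl v10 2" using Y13 l13 sy[OF Y13 Y10 e13_10] by (simp add: Nl_mem)
  obtain v15 where v15: "v15 \<in> Nl v10 2" and n15_2: "v15 \<noteq> v2" and n15_13: "v15 \<noteq> v13"
    using other2[OF N10card n2_13] by blast
  have Y15: "v15 \<in> Y" and e10_15: "c v10 v15 = 1" and l15: "c v15 y0 = 2" using v15 by (auto simp: Nl_mem)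
  have N10: "\<And>z. z \<in> Y \<Longrightarrow> c z v10 = 1 \<Longrightarrow> c z y0 = 2 \<Longrightarrow> z = v2 \<or> z = v13 \<or> z = v15"
  proof -
    fix z assume z: "z \<in> Y" "c z v10 = 1" "c z y0 = 2"
    hence "z \<in> Nl v10 2" using sy[OF z(1) Y10] by (simp add: Nl_mem)
    thus "z = v2 \<or> z = v13 \<or> z = v15"
      by (rule three_elems[OF N10card v2N10 v13N10 v15 n2_13 n15_2[symmetric] n15_13[symmetric]])
  qed
  have N1: "\<And>z. z \<in> Nl v1 2 \<Longrightarrow> z = v2 \<or> z = v9" by (rule two_elems[OF N1card v2 v9 n29])
  have N8: "\<And>z. z \<in> Nl v8 2 \<Longrightarrow> z = v11 \<or> z = v13" by (rule two_elems[OF N8card v11N8 v13 n11_13[symmetric]])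
  have e7_15: "c v7 v15 = 1"
  proof -
    obtain p where p: "p \<in> Y" "c v15 p = 1" "c p y0 = 1" using get_nb[OF Y15 l15, of 1] by (auto simp: Tt_def)
    have pc: "p = v1 \<or> p = v8 \<or> p = v7" by (rule N0[OF p(1,3)])
    have "p \<noteq> v1"
    proof
      assume h: "p = v1"
      hence "v15 \<in> Nl v1 2" using sy[OF Y15 p(1) p(2)] Y15 l15 by (simp add: Nl_mem)
      hence "v15 = v9" using N1 n15_2 by blast
      hence "v10 = v14" using lev3_uniq[OF Y9 l9 Y10 Y14 _ e9_14 l10 l14] sy[OF Y10 Y15 e10_15] by simp
      thus False using n10_14 by simp
    qed
    moreover have "p \<noteq> v8"
    proof
      assume h: "p = v8"
      hence "v15 \<in> Nl v8 2" using sy[OF Y15 p(1) p(2)] Y15 l15 by (simp add: Nl_mem)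
      hence "v15 = v11" using N8 n15_13 by blast
      hence "v10 = v14" using lev3_uniq[OF Y11 l11 Y10 Y14 _ e11_14 l10 l14] sy[OF Y10 Y15 e10_15] by simp
      thus False using n10_14 by simp
    qed
    ultimately have "p = v7" using pc by simp
    thus ?thesis using sy[OF Y15 p(1) p(2)] by simp
  qed
  have n11_9: "v11 \<noteq> v9" by (rule par_neq[OF Y11 l11 Y8 Y1 sy[OF Y11 Y8 e11_8] e19 l8 l1 n18[symmetric]])
  have N14card: "card (Nl v14 2) = 3" using Nl_card[OF Y14, of 2] l14 by (simp add: Tt_def)
  have v11N14: "v11 \<in> Nl v14 2" using Y11 l11 sy[OF Y11 Y14 e11_14] by (simp add: Nl_mem)
  have v9N14: "v9 \<in> Nl v14 2" using Y9 l9 sy[OF Y9 Y14 e9_14] by (simp add: Nl_mem)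
  obtain v6 where v6: "v6 \<in> Nl v14 2" and n6_11: "v6 \<noteq> v11" and n6_9: "v6 \<noteq> v9"
    using other2[OF N14card n11_9] by blast
  have Y6: "v6 \<in> Y" and e14_6: "c v14 v6 = 1" and l6: "c v6 y0 = 2" using v6 by (auto simp: Nl_mem)
  have e7_6: "c v7 v6 = 1"
  proof -
    obtain p where p: "p \<in> Y" "c v6 p = 1" "c p y0 = 1" using get_nb[OF Y6 l6, of 1] by (auto simp: Tt_def)
    have pc: "p = v1 \<or> p = v8 \<or> p = v7" by (rule N0[OF p(1,3)])
    have "p \<noteq> v1"
    proof
      assume h: "p = v1"
      hence "v6 \<in> Nl v1 2" using sy[OF Y6 p(1) p(2)] Y6 l6 by (simp add: Nl_mem)
      hence "v6 = v2" using N1 n6_9 by blast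
      hence "v10 = v14" using lev3_uniq[OF Y2 l2 Y10 Y14 e2_10 _ l10 l14] sy[OF Y14 Y6 e14_6] by simp
      thus False using n10_14 by simp
    qed
    moreover have "p \<noteq> v8"
    proof
      assume h: "p = v8"
      hence "v6 \<in> Nl v8 2" using sy[OF Y6 p(1) p(2)] Y6 l6 by (simp add: Nl_mem)
      hence "v6 = v13" using N8 n6_11 by blast
      hence "v10 = v14" using lev3_uniq[OF Y13 l13 Y10 Y14 e13_10 _ l10 l14] sy[OF Y14 Y6 e14_6] by simp
      thus False using n10_14 by simp
    qed
    ultimately have "p = v7" using pc by simp
    thus ?thesis using sy[OF Y6 p(1) p(2)] by simp
  qed
  have n6_15: "v15 \<noteq> v6"
  proof
    assume h: "v15 = v6"
    hence "v10 = v14" using lev3_uniq[OF Y15 l15 Y10 Y14 sy[OF Y10 Y15 e10_15] _ l10 l14] sy[OF Y14 Y6 e14_6] by simp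
    thus False using n10_14 by simp
  qed
  obtain v4 where Y4: "v4 \<in> Y" and e34: "c v3 v4 = 1" and l4: "c v4 y0 = 5"
    using get_nb[OF Y3 l3, of 5] by (auto simp: Tt_def)
  have L5: "\<And>t. t \<in> Y \<Longrightarrow> c t y0 = 5 \<Longrightarrow> t = v4"
  proof -
    fix t assume t: "t \<in> Y" "c t y0 = 5"
    have K: "card {z\<in>Y. c z y0 = 5} = 1" using Lk_card[of 5] by (simp add: Kt_def)
    show "t = v4" by (rule card1_eq[OF K]) (use t Y4 l4 in auto)
  qed
  obtain v12 where Y12: "v12 \<in> Y" and e9_12: "c v9 v12 = 1" and l12: "c v12 y0 = 4"
    using get_nb[OF Y9 l9, of 4] by (auto simp: Tt_def)
  obtain v5 where Y5: "v5 \<in> Y" and e6_5: "c v6 v5 = 1" and l5: "c v5 y0 = 4"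
    using get_nb[OF Y6 l6, of 4] by (auto simp: Tt_def)
  have e12_4: "c v12 v4 = 1"
  proof -
    obtain w where w: "w \<in> Y" "c v12 w = 1" "c w y0 = 5" using get_nb[OF Y12 l12, of 5] by (auto simp: Tt_def)
    thus ?thesis using L5[OF w(1,3)] by simp
  qed
  have e5_4: "c v5 v4 = 1"
  proof -
    obtain w where w: "w \<in> Y" "c v5 w = 1" "c w y0 = 5" using get_nb[OF Y5 l5, of 5] by (auto simp: Tt_def)
    thus ?thesis using L5[OF w(1,3)] by simp
  qed
  have n2_6: "v2 \<noteq> v6" by (rule par_neq[OF Y2 l2 Y1 Y7 e12 e7_6 l1 l7 n17[symmetric]])
  have n11_6: "v11 \<noteq> v6" using n6_11 by simp
  have n9_13: "v9 \<noteq> v13" by (rule par_neq[OF Y9 l9 Y1 Y8 e19 e8_13 l1 l8 n18])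
  have n9_6: "v9 \<noteq> v6" using n6_9 by simp
  have n13_6: "v13 \<noteq> v6" by (rule par_neq[OF Y13 l13 Y8 Y7 e8_13 e7_6 l8 l7 n78[symmetric]])
  have N3: "\<And>z. z \<in> Nl v3 2 \<Longrightarrow> z = v2 \<or> z = v11" by (rule two_elems[OF N3card v2N3 v11 n2_11[symmetric]])
  have N5card: "card (Nl v5 2) = 2" using Nl_card[OF Y5, of 2] l5 by (simp add: Tt_def)
  have v6N5: "v6 \<in> Nl v5 2" using Y6 l6 sy[OF Y6 Y5 e6_5] by (simp add: Nl_mem)
  obtain z' where z': "z' \<in> Nl v5 2" and nz6: "z' \<noteq> v6" using other1[OF N5card v6N5] by blast
  have Yz': "z' \<in> Y" and e5z: "c v5 z' = 1" and lz': "c z' y0 = 2" using z' by (auto simp: Nl_mem)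
  have ez10: "c z' v10 = 1"
  proof -
    obtain t where t: "t \<in> Y" "c z' t = 1" "c t y0 = 3" using get_nb[OF Yz' lz', of 3] by (auto simp: Tt_def)
    have "t \<noteq> v14"
    proof
      assume "t = v14"
      hence "v5 = v14" using CN[OF Y6 Yz' Y5 Y14 nz6[symmetric] e6_5 e5z sy[OF Y14 Y6 e14_6]] sy[OF Yz' t(1) t(2)] by simp
      thus False using l5 l14 by simp
    qed
    hence "t = v10" using L3[OF t(1,3)] by simp
    thus ?thesis using t by simp
  qed
  have zc: "z' = v2 \<or> z' = v13 \<or> z' = v15" by (rule N10[OF Yz' ez10 lz'])
  have "z' \<noteq> v15"
  proof
    assume "z' = v15"
    hence "v7 = v5" using CN[OF Y6 Y15 Y7 Y5 n6_15[symmetric] sy[OF Y7 Y6 e7_6] e7_15 e6_5] e5z by simp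
    thus False using l7 l5 by simp
  qed
  moreover have "z' \<noteq> v2"
  proof
    assume "z' = v2"
    hence "v3 = v5" using lev4_uniq[OF Y2 l2 Y3 Y5 e23 _ l3 l5] sy[OF Y5 Yz' e5z] by simp
    hence "v6 \<in> Nl v3 2" using v6N5 by simp
    hence "v6 = v2 \<or> v6 = v11" by (rule N3)
    thus False using n2_6 n11_6 by auto
  qed
  ultimately have zv13: "z' = v13" using zc by simp
  have e5_13: "c v5 v13 = 1" using e5z zv13 by simp
  have N12card: "card (Nl v12 2) = 2" using Nl_card[OF Y12, of 2] l12 by (simp add: Tt_def)
  have v9N12: "v9 \<in> Nl v12 2" using Y9 l9 sy[OF Y9 Y12 e9_12] by (simp add: Nl_mem)
  obtain z where z: "z \<in> Nl v12 2" and nz9: "z \<noteq> v9" using other1[OF N12card v9N12] by blast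
  have Yz: "z \<in> Y" and e12z: "c v12 z = 1" and lz: "c z y0 = 2" using z by (auto simp: Nl_mem)
  have ez10': "c z v10 = 1"
  proof -
    obtain t where t: "t \<in> Y" "c z t = 1" "c t y0 = 3" using get_nb[OF Yz lz, of 3] by (auto simp: Tt_def)
    have "t \<noteq> v14"
    proof
      assume "t = v14"
      hence "v12 = v14" using CN[OF Y9 Yz Y12 Y14 nz9[symmetric] e9_12 e12z e9_14] sy[OF Yz t(1) t(2)] by simp
      thus False using l12 l14 by simp
    qed
    hence "t = v10" using L3[OF t(1,3)] by simp
    thus ?thesis using t by simp
  qed
  have zc': "z = v2 \<or> z = v13 \<or> z = v15" by (rule N10[OF Yz ez10' lz])
  have "z \<noteq> v2"
  proof
    assume "z = v2"
    hence "v12 = v1" using CN[OF Y9 Y2 Y12 Y1 n29[symmetric] e9_12 _ sy[OF Y1 Y9 e19] e12] e12z by simp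
    thus False using l12 l1 by simp
  qed
  moreover have "z \<noteq> v13"
  proof
    assume "z = v13"
    hence "v12 = v5" using lev4_uniq[OF Y13 l13 Y12 Y5 _ _ l12 l5] sy[OF Y12 Yz e12z] sy[OF Y5 Y13 e5_13] by simp
    hence v6N12: "v6 \<in> Nl v12 2" using v6N5 by simp
    have v13N12: "v13 \<in> Nl v12 2" using z \<open>z = v13\<close> by simp
    have "v6 = v9 \<or> v6 = v13" by (rule two_elems[OF N12card v9N12 v13N12 n9_13 v6N12])
    thus False using n9_6 n13_6 by auto
  qed
  ultimately have zv15: "z = v15" using zc' by simp
  have e12_15: "c v12 v15 = 1" using e12z zv15 by simp
  have n3_12: "v3 \<noteq> v12"
  proof
    assume "v3 = v12"
    hence "v1 = v3" using CN[OF Y2 Y9 Y1 Y3 n29 sy[OF Y1 Y2 e12] e19 e23] sy[OF Y9 Y12 e9_12] by simp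
    thus False using l1 l3 by simp
  qed
  have n3_5: "v3 \<noteq> v5"
  proof
    assume "v3 = v5"
    hence "v3 = v14" using CN[OF Y11 Y6 Y3 Y14 n11_6 sy[OF Y3 Y11 e3_11] _ e11_14 e14_6] sy[OF Y6 Y5 e6_5] by simp
    thus False using l3 l14 by simp
  qed
  have n12_5: "v12 \<noteq> v5"
  proof
    assume "v12 = v5"
    hence "v12 = v14" using CN[OF Y9 Y6 Y12 Y14 n9_6 e9_12 _ e9_14 e14_6] sy[OF Y6 Y5 e6_5] by simp
    thus False using l12 l14 by simp
  qed
  show ?thesis
    apply (rule that[of v1 v2 v3 v4 v5 v6 v7 v8 v9 v10 v11 v12 v13 v14 v15])
    using Y1 Y2 Y3 Y4 Y5 Y6 Y7 Y8 Y9 Y10 Y11 Y12 Y13 Y14 Y15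
      l1 l7 l8 l2 l9 l11 l13 l15 l6 l10 l14 l3 l12 l5 l4
      n18 n17 n78 n29 n11_13 n6_15 n10_14 n3_12 n3_5 n12_5
      e01 e12 e23 e34 sy[OF Y5 Y4 e5_4] sy[OF Y6 Y5 e6_5] sy[OF Y7 Y6 e7_6] l7
      sy[OF Y8 y0 l8] e19 e2_10 e3_11 sy[OF Y12 Y4 e12_4] e5_13 sy[OF Y14 Y6 e14_6] e7_15
      sy[OF Y11 Y8 e11_8] e9_12 sy[OF Y13 Y10 e13_10] e11_14 e12_15 sy[OF Y8 Y13 e8_13] sy[OF Y9 Y14 e9_14] sy[OF Y10 Y15 e10_15]
    by auto
qed

end


context Ysch begin

theorem recon: "\<exists>f. bij_betw f {0..<16} Y \<and> (\<forall>x<16. \<forall>y<16. c (f x) (f y) = 1 \<longleftrightarrow> r0 x y = 1)"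
proof -
  obtain v1 v2 v3 v4 v5 v6 v7 v8 v9 v10 v11 v12 v13 v14 v15 where
   YY: "v1 \<in> Y" "v2 \<in> Y" "v3 \<in> Y" "v4 \<in> Y" "v5 \<in> Y" "v6 \<in> Y" "v7 \<in> Y" "v8 \<in> Y"
   "v9 \<in> Y" "v10 \<in> Y" "v11 \<in> Y" "v12 \<in> Y" "v13 \<in> Y" "v14 \<in> Y" "v15 \<in> Y" and
   Lv0: "c v1 y0 = 1" "c v7 y0 = 1" "c v8 y0 = 1"
   "c v2 y0 = 2" "c v9 y0 = 2" "c v11 y0 = 2" "c v13 y0 = 2" "c v15 y0 = 2" "c v6 y0 = 2"
   "c v10 y0 = 3" "c v14 y0 = 3" "c v3 y0 = 4" "c v12 y0 = 4" "c v5 y0 = 4" "c v4 y0 = 5" and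
   NQ: "v1 \<noteq> v8" "v1 \<noteq> v7" "v7 \<noteq> v8" "v2 \<noteq> v9" "v11 \<noteq> v13" "v15 \<noteq> v6" "v10 \<noteq> v14"
   "v3 \<noteq> v12" "v3 \<noteq> v5" "v12 \<noteq> v5" and
   E1: "c y0 v1 = 1" "c v1 v2 = 1" "c v2 v3 = 1" "c v3 v4 = 1" "c v4 v5 = 1" "c v5 v6 = 1" "c v6 v7 = 1" "c v7 y0 = 1" "c y0 v8 = 1" "c v1 v9 = 1" "c v2 v10 = 1" "c v3 v11 = 1" "c v4 v12 = 1" "c v5 v13 = 1" "c v6 v14 = 1" "c v7 v15 = 1" "c v8 v11 = 1" "c v9 v12 = 1" "c v10 v13 = 1" "c v11 v14 = 1" "c v12 v15 = 1" "c v13 v8 = 1" "c v14 v9 = 1" "c v15 v10 = 1"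
    by (rule construct)
  have Lv: "c y0 y0 = 0" "c v1 y0 = 1" "c v7 y0 = 1" "c v8 y0 = 1"
   "c v2 y0 = 2" "c v9 y0 = 2" "c v11 y0 = 2" "c v13 y0 = 2" "c v15 y0 = 2" "c v6 y0 = 2"
   "c v10 y0 = 3" "c v14 y0 = 3" "c v3 y0 = 4" "c v12 y0 = 4" "c v5 y0 = 4" "c v4 y0 = 5"
    using Lv0 c0 y0 by auto
  have YY': "y0 \<in> Y" using y0 .
  have E2_0: "c v1 y0 = 1" by (rule sy[OF YY' YY(1) E1(1)])
  have E2_1: "c v2 v1 = 1" by (rule sy[OF YY(1) YY(2) E1(2)])
  have E2_2: "c v3 v2 = 1" by (rule sy[OF YY(2) YY(3) E1(3)])
  have E2_3: "c v4 v3 = 1" by (rule sy[OF YY(3) YY(4) E1(4)])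
  have E2_4: "c v5 v4 = 1" by (rule sy[OF YY(4) YY(5) E1(5)])
  have E2_5: "c v6 v5 = 1" by (rule sy[OF YY(5) YY(6) E1(6)])
  have E2_6: "c v7 v6 = 1" by (rule sy[OF YY(6) YY(7) E1(7)])
  have E2_7: "c y0 v7 = 1" by (rule sy[OF YY(7) YY' E1(8)])
  have E2_8: "c v8 y0 = 1" by (rule sy[OF YY' YY(8) E1(9)])
  have E2_9: "c v9 v1 = 1" by (rule sy[OF YY(1) YY(9) E1(10)])
  have E2_10: "c v10 v2 = 1" by (rule sy[OF YY(2) YY(10) E1(11)])
  have E2_11: "c v11 v3 = 1" by (rule sy[OF YY(3) YY(11) E1(12)])
  have E2_12: "c v12 v4 = 1" by (rule sy[OF YY(4) YY(12) E1(13)])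
  have E2_13: "c v13 v5 = 1" by (rule sy[OF YY(5) YY(13) E1(14)])
  have E2_14: "c v14 v6 = 1" by (rule sy[OF YY(6) YY(14) E1(15)])
  have E2_15: "c v15 v7 = 1" by (rule sy[OF YY(7) YY(15) E1(16)])
  have E2_16: "c v11 v8 = 1" by (rule sy[OF YY(8) YY(11) E1(17)])
  have E2_17: "c v12 v9 = 1" by (rule sy[OF YY(9) YY(12) E1(18)])
  have E2_18: "c v13 v10 = 1" by (rule sy[OF YY(10) YY(13) E1(19)])
  have E2_19: "c v14 v11 = 1" by (rule sy[OF YY(11) YY(14) E1(20)])
  have E2_20: "c v15 v12 = 1" by (rule sy[OF YY(12) YY(15) E1(21)])
  have E2_21: "c v8 v13 = 1" by (rule sy[OF YY(13) YY(8) E1(22)])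
  have E2_22: "c v9 v14 = 1" by (rule sy[OF YY(14) YY(9) E1(23)])
  have E2_23: "c v10 v15 = 1" by (rule sy[OF YY(15) YY(10) E1(24)])
  note E2 = E2_0 E2_1 E2_2 E2_3 E2_4 E2_5 E2_6 E2_7 E2_8 E2_9 E2_10 E2_11 E2_12 E2_13 E2_14 E2_15 E2_16 E2_17 E2_18 E2_19 E2_20 E2_21 E2_22 E2_23
  note EE = E1 E2
  have nq_0_1: "y0 \<noteq> v1" by (rule neq_lev) (simp add: Lv)
  have nq_0_2: "y0 \<noteq> v2" by (rule neq_lev) (simp add: Lv)
  have nq_0_3: "y0 \<noteq> v3" by (rule neq_lev) (simp add: Lv)
  have nq_0_4: "y0 \<noteq> v4" by (rule neq_lev) (simp add: Lv)
  have nq_0_5: "y0 \<noteq> v5" by (rule neq_lev) (simp add: Lv)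
  have nq_0_6: "y0 \<noteq> v6" by (rule neq_lev) (simp add: Lv)
  have nq_0_7: "y0 \<noteq> v7" by (rule neq_lev) (simp add: Lv)
  have nq_0_8: "y0 \<noteq> v8" by (rule neq_lev) (simp add: Lv)
  have nq_0_9: "y0 \<noteq> v9" by (rule neq_lev) (simp add: Lv)
  have nq_0_10: "y0 \<noteq> v10" by (rule neq_lev) (simp add: Lv)
  have nq_0_11: "y0 \<noteq> v11" by (rule neq_lev) (simp add: Lv)
  have nq_0_12: "y0 \<noteq> v12" by (rule neq_lev) (simp add: Lv)
  have nq_0_13: "y0 \<noteq> v13" by (rule neq_lev) (simp add: Lv)
  have nq_0_14: "y0 \<noteq> v14" by (rule neq_lev) (simp add: Lv)
  have nq_0_15: "y0 \<noteq> v15" by (rule neq_lev) (simp add: Lv)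
  have nq_1_2: "v1 \<noteq> v2" by (rule neq_lev) (simp add: Lv)
  have nq_1_3: "v1 \<noteq> v3" by (rule neq_lev) (simp add: Lv)
  have nq_1_4: "v1 \<noteq> v4" by (rule neq_lev) (simp add: Lv)
  have nq_1_5: "v1 \<noteq> v5" by (rule neq_lev) (simp add: Lv)
  have nq_1_6: "v1 \<noteq> v6" by (rule neq_lev) (simp add: Lv)
  have nq_1_7: "v1 \<noteq> v7" using NQ by auto
  have nq_1_8: "v1 \<noteq> v8" using NQ by auto
  have nq_1_9: "v1 \<noteq> v9" by (rule neq_lev) (simp add: Lv)
  have nq_1_10: "v1 \<noteq> v10" by (rule neq_lev) (simp add: Lv)
  have nq_1_11: "v1 \<noteq> v11" by (rule neq_lev) (simp add: Lv)
  have nq_1_12: "v1 \<noteq> v12" by (rule neq_lev) (simp add: Lv)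
  have nq_1_13: "v1 \<noteq> v13" by (rule neq_lev) (simp add: Lv)
  have nq_1_14: "v1 \<noteq> v14" by (rule neq_lev) (simp add: Lv)
  have nq_1_15: "v1 \<noteq> v15" by (rule neq_lev) (simp add: Lv)
  have nq_2_3: "v2 \<noteq> v3" by (rule neq_lev) (simp add: Lv)
  have nq_2_4: "v2 \<noteq> v4" by (rule neq_lev) (simp add: Lv)
  have nq_2_5: "v2 \<noteq> v5" by (rule neq_lev) (simp add: Lv)
  have nq_2_6: "v2 \<noteq> v6" by (rule par_neq[OF YY(2) Lv(5) YY(1) YY(7) E1(2) E2_6 Lv(2) Lv(3) NQ(2)])
  have nq_2_7: "v2 \<noteq> v7" by (rule neq_lev) (simp add: Lv)
  have nq_2_8: "v2 \<noteq> v8" by (rule neq_lev) (simp add: Lv)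
  have nq_2_9: "v2 \<noteq> v9" using NQ by auto
  have nq_2_10: "v2 \<noteq> v10" by (rule neq_lev) (simp add: Lv)
  have nq_2_11: "v2 \<noteq> v11" by (rule par_neq[OF YY(2) Lv(5) YY(1) YY(8) E1(2) E1(17) Lv(2) Lv(4) NQ(1)])
  have nq_2_12: "v2 \<noteq> v12" by (rule neq_lev) (simp add: Lv)
  have nq_2_13: "v2 \<noteq> v13" by (rule par_neq[OF YY(2) Lv(5) YY(1) YY(8) E1(2) E2_21 Lv(2) Lv(4) NQ(1)])
  have nq_2_14: "v2 \<noteq> v14" by (rule neq_lev) (simp add: Lv)
  have nq_2_15: "v2 \<noteq> v15" by (rule par_neq[OF YY(2) Lv(5) YY(1) YY(7) E1(2) E1(16) Lv(2) Lv(3) NQ(2)])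
  have nq_3_4: "v3 \<noteq> v4" by (rule neq_lev) (simp add: Lv)
  have nq_3_5: "v3 \<noteq> v5" using NQ by auto
  have nq_3_6: "v3 \<noteq> v6" by (rule neq_lev) (simp add: Lv)
  have nq_3_7: "v3 \<noteq> v7" by (rule neq_lev) (simp add: Lv)
  have nq_3_8: "v3 \<noteq> v8" by (rule neq_lev) (simp add: Lv)
  have nq_3_9: "v3 \<noteq> v9" by (rule neq_lev) (simp add: Lv)
  have nq_3_10: "v3 \<noteq> v10" by (rule neq_lev) (simp add: Lv)
  have nq_3_11: "v3 \<noteq> v11" by (rule neq_lev) (simp add: Lv)
  have nq_3_12: "v3 \<noteq> v12" using NQ by auto
  have nq_3_13: "v3 \<noteq> v13" by (rule neq_lev) (simp add: Lv)
  have nq_3_14: "v3 \<noteq> v14" by (rule neq_lev) (simp add: Lv)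
  have nq_3_15: "v3 \<noteq> v15" by (rule neq_lev) (simp add: Lv)
  have nq_4_5: "v4 \<noteq> v5" by (rule neq_lev) (simp add: Lv)
  have nq_4_6: "v4 \<noteq> v6" by (rule neq_lev) (simp add: Lv)
  have nq_4_7: "v4 \<noteq> v7" by (rule neq_lev) (simp add: Lv)
  have nq_4_8: "v4 \<noteq> v8" by (rule neq_lev) (simp add: Lv)
  have nq_4_9: "v4 \<noteq> v9" by (rule neq_lev) (simp add: Lv)
  have nq_4_10: "v4 \<noteq> v10" by (rule neq_lev) (simp add: Lv)
  have nq_4_11: "v4 \<noteq> v11" by (rule neq_lev) (simp add: Lv)
  have nq_4_12: "v4 \<noteq> v12" by (rule neq_lev) (simp add: Lv)
  have nq_4_13: "v4 \<noteq> v13" by (rule neq_lev) (simp add: Lv)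
  have nq_4_14: "v4 \<noteq> v14" by (rule neq_lev) (simp add: Lv)
  have nq_4_15: "v4 \<noteq> v15" by (rule neq_lev) (simp add: Lv)
  have nq_5_6: "v5 \<noteq> v6" by (rule neq_lev) (simp add: Lv)
  have nq_5_7: "v5 \<noteq> v7" by (rule neq_lev) (simp add: Lv)
  have nq_5_8: "v5 \<noteq> v8" by (rule neq_lev) (simp add: Lv)
  have nq_5_9: "v5 \<noteq> v9" by (rule neq_lev) (simp add: Lv)
  have nq_5_10: "v5 \<noteq> v10" by (rule neq_lev) (simp add: Lv)
  have nq_5_11: "v5 \<noteq> v11" by (rule neq_lev) (simp add: Lv)
  have nq_5_12: "v5 \<noteq> v12" using NQ by auto
  have nq_5_13: "v5 \<noteq> v13" by (rule neq_lev) (simp add: Lv)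
  have nq_5_14: "v5 \<noteq> v14" by (rule neq_lev) (simp add: Lv)
  have nq_5_15: "v5 \<noteq> v15" by (rule neq_lev) (simp add: Lv)
  have nq_6_7: "v6 \<noteq> v7" by (rule neq_lev) (simp add: Lv)
  have nq_6_8: "v6 \<noteq> v8" by (rule neq_lev) (simp add: Lv)
  have nq_6_9: "v6 \<noteq> v9" by (rule par_neq[OF YY(6) Lv(10) YY(7) YY(1) E2_6 E1(10) Lv(3) Lv(2) NQ(2)[symmetric]])
  have nq_6_10: "v6 \<noteq> v10" by (rule neq_lev) (simp add: Lv)
  have nq_6_11: "v6 \<noteq> v11" by (rule par_neq[OF YY(6) Lv(10) YY(7) YY(8) E2_6 E1(17) Lv(3) Lv(4) NQ(3)])
  have nq_6_12: "v6 \<noteq> v12" by (rule neq_lev) (simp add: Lv)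
  have nq_6_13: "v6 \<noteq> v13" by (rule par_neq[OF YY(6) Lv(10) YY(7) YY(8) E2_6 E2_21 Lv(3) Lv(4) NQ(3)])
  have nq_6_14: "v6 \<noteq> v14" by (rule neq_lev) (simp add: Lv)
  have nq_6_15: "v6 \<noteq> v15" using NQ by auto
  have nq_7_8: "v7 \<noteq> v8" using NQ by auto
  have nq_7_9: "v7 \<noteq> v9" by (rule neq_lev) (simp add: Lv)
  have nq_7_10: "v7 \<noteq> v10" by (rule neq_lev) (simp add: Lv)
  have nq_7_11: "v7 \<noteq> v11" by (rule neq_lev) (simp add: Lv)
  have nq_7_12: "v7 \<noteq> v12" by (rule neq_lev) (simp add: Lv)
  have nq_7_13: "v7 \<noteq> v13" by (rule neq_lev) (simp add: Lv)
  have nq_7_14: "v7 \<noteq> v14" by (rule neq_lev) (simp add: Lv)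
  have nq_7_15: "v7 \<noteq> v15" by (rule neq_lev) (simp add: Lv)
  have nq_8_9: "v8 \<noteq> v9" by (rule neq_lev) (simp add: Lv)
  have nq_8_10: "v8 \<noteq> v10" by (rule neq_lev) (simp add: Lv)
  have nq_8_11: "v8 \<noteq> v11" by (rule neq_lev) (simp add: Lv)
  have nq_8_12: "v8 \<noteq> v12" by (rule neq_lev) (simp add: Lv)
  have nq_8_13: "v8 \<noteq> v13" by (rule neq_lev) (simp add: Lv)
  have nq_8_14: "v8 \<noteq> v14" by (rule neq_lev) (simp add: Lv)
  have nq_8_15: "v8 \<noteq> v15" by (rule neq_lev) (simp add: Lv)
  have nq_9_10: "v9 \<noteq> v10" by (rule neq_lev) (simp add: Lv)
  have nq_9_11: "v9 \<noteq> v11" by (rule par_neq[OF YY(9) Lv(6) YY(1) YY(8) E1(10) E1(17) Lv(2) Lv(4) NQ(1)])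
  have nq_9_12: "v9 \<noteq> v12" by (rule neq_lev) (simp add: Lv)
  have nq_9_13: "v9 \<noteq> v13" by (rule par_neq[OF YY(9) Lv(6) YY(1) YY(8) E1(10) E2_21 Lv(2) Lv(4) NQ(1)])
  have nq_9_14: "v9 \<noteq> v14" by (rule neq_lev) (simp add: Lv)
  have nq_9_15: "v9 \<noteq> v15" by (rule par_neq[OF YY(9) Lv(6) YY(1) YY(7) E1(10) E1(16) Lv(2) Lv(3) NQ(2)])
  have nq_10_11: "v10 \<noteq> v11" by (rule neq_lev) (simp add: Lv)
  have nq_10_12: "v10 \<noteq> v12" by (rule neq_lev) (simp add: Lv)
  have nq_10_13: "v10 \<noteq> v13" by (rule neq_lev) (simp add: Lv)
  have nq_10_14: "v10 \<noteq> v14" using NQ by auto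
  have nq_10_15: "v10 \<noteq> v15" by (rule neq_lev) (simp add: Lv)
  have nq_11_12: "v11 \<noteq> v12" by (rule neq_lev) (simp add: Lv)
  have nq_11_13: "v11 \<noteq> v13" using NQ by auto
  have nq_11_14: "v11 \<noteq> v14" by (rule neq_lev) (simp add: Lv)
  have nq_11_15: "v11 \<noteq> v15" by (rule par_neq[OF YY(11) Lv(7) YY(8) YY(7) E1(17) E1(16) Lv(4) Lv(3) NQ(3)[symmetric]])
  have nq_12_13: "v12 \<noteq> v13" by (rule neq_lev) (simp add: Lv)
  have nq_12_14: "v12 \<noteq> v14" by (rule neq_lev) (simp add: Lv)
  have nq_12_15: "v12 \<noteq> v15" by (rule neq_lev) (simp add: Lv)
  have nq_13_14: "v13 \<noteq> v14" by (rule neq_lev) (simp add: Lv)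
  have nq_13_15: "v13 \<noteq> v15" by (rule par_neq[OF YY(13) Lv(8) YY(8) YY(7) E2_21 E1(16) Lv(4) Lv(3) NQ(3)[symmetric]])
  have nq_14_15: "v14 \<noteq> v15" by (rule neq_lev) (simp add: Lv)

  define vs where "vs = [y0, v1, v2, v3, v4, v5, v6, v7, v8, v9, v10, v11, v12, v13, v14, v15]"
  define f where "f x = vs ! x" for x
  have dvs: "distinct vs" unfolding vs_def using nq_0_1 nq_0_2 nq_0_3 nq_0_4 nq_0_5 nq_0_6 nq_0_7 nq_0_8 nq_0_9 nq_0_10 nq_0_11 nq_0_12 nq_0_13 nq_0_14 nq_0_15 nq_1_2 nq_1_3 nq_1_4 nq_1_5 nq_1_6 nq_1_7 nq_1_8 nq_1_9 nq_1_10 nq_1_11 nq_1_12 nq_1_13 nq_1_14 nq_1_15 nq_2_3 nq_2_4 nq_2_5 nq_2_6 nq_2_7 nq_2_8 nq_2_9 nq_2_10 nq_2_11 nq_2_12 nq_2_13 nq_2_14 nq_2_15 nq_3_4 nq_3_5 nq_3_6 nq_3_7 nq_3_8 nq_3_9 nq_3_10 nq_3_11 nq_3_12 nq_3_13 nq_3_14 nq_3_15 nq_4_5 nq_4_6 nq_4_7 nq_4_8 nq_4_9 nq_4_10 nq_4_11 nq_4_12 nq_4_13 nq_4_14 nq_4_15 nq_5_6 nq_5_7 nq_5_8 nq_5_9 nq_5_10 nq_5_11 nq_5_12 nq_5_13 nq_5_14 nq_5_15 nq_6_7 nq_6_8 nq_6_9 nq_6_10 nq_6_11 nq_6_12 nq_6_13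 nq_6_14 nq_6_15 nq_7_8 nq_7_9 nq_7_10 nq_7_11 nq_7_12 nq_7_13 nq_7_14 nq_7_15 nq_8_9 nq_8_10 nq_8_11 nq_8_12 nq_8_13 nq_8_14 nq_8_15 nq_9_10 nq_9_11 nq_9_12 nq_9_13 nq_9_14 nq_9_15 nq_10_11 nq_10_12 nq_10_13 nq_10_14 nq_10_15 nq_11_12 nq_11_13 nq_11_14 nq_11_15 nq_12_13 nq_12_14 nq_12_15 nq_13_14 nq_13_15 nq_14_15 by simp
  have lvs: "length vs = 16" unfolding vs_def by simp
  have inj: "inj_on f {0..<16}" unfolding f_def[abs_def] by (rule inj_on_nth[OF dvs]) (simp add: lvs)
  have fY0: "\<forall>x<16. f x \<in> Y" unfolding ball16 apply (simp only: upt16 list.pred_inject)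
    unfolding f_def vs_def using YY YY' by simp
  have fY: "\<And>x. x < 16 \<Longrightarrow> f x \<in> Y" using fY0 by simp
  have sub: "f ` {0..<16} \<subseteq> Y" using fY by auto
  have cim: "card (f ` {0..<16}) = 16" using card_image[OF inj] by simp
  have im: "f ` {0..<16} = Y" by (rule card_subset_eq[OF fin sub]) (simp add: cim card_Y)
  have bij: "bij_betw f {0..<16} Y" unfolding bij_betw_def using inj im by simp
  have edg0: "\<forall>x<16. \<forall>y<16. r0 x y = 1 \<longrightarrow> c (f x) (f y) = 1"
    unfolding ball16 apply (simp only: upt16 list.pred_inject)
    unfolding f_def vs_def using EE by simp
  have edg: "\<And>x y. x < 16 \<Longrightarrow> y < 16 \<Longrightarrow> r0 x y = 1 \<Longrightarrow> c (f x) (f y) = 1"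
    using edg0 by simp
  have conv: "r0 x y = 1" if xy: "x < 16" "y < 16" "c (f x) (f y) = 1" for x y
  proof -
    let ?NX = "{z\<in>{0..<16}. r0 x z = 1}"
    have "?NX = {z\<in>{0..<16}. r0 x z = 1 \<and> r0 z x = 1}" using r0_sym xy(1) by auto
    hence cNX: "card ?NX = 3" using C_K[OF xy(1), of 1] unfolding C_def by (simp add: Kt_def)
    have inj2: "inj_on f ?NX" by (rule inj_on_subset[OF inj]) auto
    have cfN: "card (f ` ?NX) = 3" using card_image[OF inj2] cNX by simp
    have sub2: "f ` ?NX \<subseteq> {z\<in>Y. c (f x) z = 1}" using edg xy(1) fY by auto
    have "f ` ?NX = {z\<in>Y. c (f x) z = 1}"
      by (rule card_subset_eq[OF _ sub2]) (use fin deg3[OF fY[OF xy(1)]] cfN in auto)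
    hence "f y \<in> f ` ?NX" using xy fY by auto
    then obtain z where z: "z \<in> ?NX" "f z = f y" by auto
    have "z = y" using inj_onD[OF inj z(2)] z(1) xy(2) by auto
    thus ?thesis using z by simp
  qed
  show ?thesis using bij edg conv by blast
qed

end


lemma inter_num_at:
  assumes sch: "assoc_scheme Y d q" and uv: "u \<in> Y" "v \<in> Y" "q u v = h"
  shows "inter_num Y q h i j = card {z\<in>Y. q u z = i \<and> q z v = j}"
proof -
  define p where "p = (SOME p. p \<in> Y \<times> Y \<and> q (fst p) (snd p) = h)"
  have "\<exists>p. p \<in> Y \<times> Y \<and> q (fst p) (snd p) = h" using uv by (intro exI[of _ "(u,v)"]) simp
  hence p: "p \<in> Y \<times> Y \<and> q (fst p) (snd p) = h" unfolding p_def by (rule someI_ex)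
  have "inter_num Y q h i j = card {z\<in>Y. q (fst p) z = i \<and> q z (snd p) = j}"
    unfolding inter_num_def Let_def p_def by simp
  also have "\<dots> = card {z\<in>Y. q u z = i \<and> q z v = j}"
    by (rule scheme_card_eq[OF sch]) (use p uv in auto)
  finally show ?thesis .
qed

lemma valency_at:
  assumes sch: "assoc_scheme Y d q" and u: "u \<in> Y"
  shows "valency Y q i = card {z\<in>Y. q u z = i}"
proof -
  have "valency Y q i = card {z\<in>Y. q u z = i \<and> q z u = i}"
    unfolding valency_def by (rule inter_num_at[OF sch u u]) (use scheme_props(4)[OF sch u u] in simp)
  also have "{z\<in>Y. q u z = i \<and> q z u = i} = {z\<in>Y. q u z = i}"
    using scheme_props(5)[OF sch] u by auto
  finally show ?thesis .
qed

lemma bij05_inj: "bij_betw g {0..5::nat} {0..5::nat} \<Longrightarrow> a \<le> 5 \<Longrightarrow> b \<le> 5 \<Longrightarrow> g a = g b \<longleftrightarrow> a = b"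
  unfolding bij_betw_def inj_on_def by auto

lemma bij05_le: "bij_betw g {0..5::nat} {0..5::nat} \<Longrightarrow> a \<le> 5 \<Longrightarrow> g a \<le> 5"
  unfolding bij_betw_def by auto

lemma bij05_inv: assumes "bij_betw g {0..5::nat} {0..5::nat}" "a \<le> 5"
  shows "inv_into {0..5} g a \<le> 5" "g (inv_into {0..5} g a) = a"
proof -
  have "a \<in> g ` {0..5}" using assms unfolding bij_betw_def by auto
  thus "inv_into {0..5} g a \<le> 5" "g (inv_into {0..5} g a) = a"
    using inv_into_into[of a g "{0..5}"] f_inv_into_f[of a g "{0..5}"] by auto
qed

lemma bij05_inv_f: assumes "bij_betw g {0..5::nat} {0..5::nat}" "a \<le> 5"
  shows "inv_into {0..5} g (g a) = a"
  using assms unfolding bij_betw_def by (auto intro: inv_into_f_f)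



theorem proposition3p2:
  fixes r :: "nat \<Rightarrow> nat \<Rightarrow> nat" and Y :: "'b set" and r' :: "'b \<Rightarrow> 'b \<Rightarrow> nat"
  assumes "generated_scheme (gp_vertices 8) (gp_adj 8 3) d r"
    and "assoc_scheme Y d' r'"
    and "same_rd_diagram (gp_vertices 8) d r Y d' r'"
  shows "scheme_iso (gp_vertices 8) d r Y d' r'"
proof -
  let ?X = "gp_vertices 8"
  have X: "?X = {0..<16}" by (rule X_def)
  have gs: "assoc_scheme ?X d r" "\<forall>x\<in>?X. \<forall>y\<in>?X. r x y = 1 \<longleftrightarrow> gp_adj 8 3 x y"
    "\<forall>d'' r''. assoc_scheme ?X d'' r'' \<and> (\<exists>i\<le>d''. \<forall>x\<in>?X. \<forall>y\<in>?X. r'' x y = i \<longleftrightarrow> gp_adj 8 3 x y) \<longrightarrow> d \<le> d''"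
    using assms(1) unfolding generated_scheme_def apply -
    apply (elim conjE, assumption)+
    done
  have schr: "assoc_scheme ?X d r" by (rule gs(1))
  have adjr: "\<forall>x\<in>?X. \<forall>y\<in>?X. r x y = 1 \<longleftrightarrow> gp_adj 8 3 x y" by (rule gs(2))
  have minr: "\<And>d'' r''. assoc_scheme ?X d'' r'' \<Longrightarrow> (\<exists>i\<le>d''. \<forall>x\<in>?X. \<forall>y\<in>?X. r'' x y = i \<longleftrightarrow> gp_adj 8 3 x y) \<Longrightarrow> d \<le> d''"
    using gs(3) by (intro mp[OF spec[OF spec[OF gs(3)]]] conjI)
  have "d \<le> 5"
  proof (rule minr[OF r0_scheme])
    show "\<exists>i\<le>5. \<forall>x\<in>?X. \<forall>y\<in>?X. r0 x y = i \<longleftrightarrow> gp_adj 8 3 x y"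
      using r0_adj unfolding X by (intro exI[of _ 1]) auto
  qed
  then obtain g where d5: "d = 5" and gb: "bij_betw g {0..5} {0..5}" and g0: "g 0 = 0" and g1: "g 1 = 1"
    and rg: "\<forall>x\<in>?X. \<forall>y\<in>?X. r0 x y = g (r x y)"
    using factor_r0_bij[OF schr _ adjr] by blast
  have sd: "d = d' \<and> (\<exists>\<sigma>. bij_betw \<sigma> {0..d} {0..d} \<and> \<sigma> 0 = 0 \<and> \<sigma> 1 = 1 \<and>
        (\<forall>i\<le>d. valency ?X r i = valency Y r' (\<sigma> i)) \<and>
        (\<forall>i\<le>d. \<forall>j\<le>d. inter_num ?X r i 1 j = inter_num Y r' (\<sigma> i) 1 (\<sigma> j)))"
    using assms(3) unfolding same_rd_diagram_def .
  have dd: "d = d'" using sd by (rule conjunct1)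
  from conjunct2[OF sd] obtain \<sigma> where H: "bij_betw \<sigma> {0..d} {0..d} \<and> \<sigma> 0 = 0 \<and> \<sigma> 1 = 1 \<and>
        (\<forall>i\<le>d. valency ?X r i = valency Y r' (\<sigma> i)) \<and>
        (\<forall>i\<le>d. \<forall>j\<le>d. inter_num ?X r i 1 j = inter_num Y r' (\<sigma> i) 1 (\<sigma> j))" ..
  have \<sigma>b: "bij_betw \<sigma> {0..d} {0..d}" using H by (rule conjunct1)
  have \<sigma>0: "\<sigma> 0 = 0" using H[THEN conjunct2] by (rule conjunct1)
  have \<sigma>1: "\<sigma> 1 = 1" using H[THEN conjunct2, THEN conjunct2] by (rule conjunct1)
  have val: "\<forall>i\<le>d. valency ?X r i = valency Y r' (\<sigma> i)" using H[THEN conjunct2, THEN conjunct2, THEN conjunct2] by (rule conjunct1)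
  have inn: "\<forall>i\<le>d. \<forall>j\<le>d. inter_num ?X r i 1 j = inter_num Y r' (\<sigma> i) 1 (\<sigma> j)"
    using H[THEN conjunct2, THEN conjunct2, THEN conjunct2] by (rule conjunct2)
  have d'5: "d' = 5" using dd d5 by simp
  have schY: "assoc_scheme Y 5 r'" using assms(2) d'5 by simp
  have \<sigma>b5: "bij_betw \<sigma> {0..5} {0..5}" using \<sigma>b d5 by simp
  have rbnd: "\<And>x y. x \<in> ?X \<Longrightarrow> y \<in> ?X \<Longrightarrow> r x y \<le> 5" using scheme_props(2)[OF schr] d5 by simp
  have r'bnd: "\<And>u v. u \<in> Y \<Longrightarrow> v \<in> Y \<Longrightarrow> r' u v \<le> 5" using scheme_props(2)[OF schY] by simp
  have rr0: "\<And>x y k. x \<in> ?X \<Longrightarrow> y \<in> ?X \<Longrightarrow> k \<le> 5 \<Longrightarrow> r0 x y = g k \<longleftrightarrow> r x y = k"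
    using rg rbnd bij05_inj[OF gb] by metis
  have innX: "inter_num ?X r i 1 j = Tt (g i) (g j)" if ij: "i \<le> 5" "j \<le> 5" for i j
  proof -
    obtain x y where xy: "x \<in> ?X" "y \<in> ?X" "r x y = i" using scheme_props(3)[OF schr] ij d5 by blast
    have "inter_num ?X r i 1 j = card {z\<in>?X. r x z = 1 \<and> r z y = j}" by (rule inter_num_at[OF schr xy])
    also have "{z\<in>?X. r x z = 1 \<and> r z y = j} = {z\<in>{0..<16}. r0 x z = 1 \<and> r0 z y = g j}"
      using rr0[OF xy(1) _ , of _ 1] rr0[OF _ xy(2), of _ j] ij g1 unfolding X by auto
    also have "card \<dots> = C x y 1 (g j)" unfolding C_def ..
    also have "\<dots> = Tt (r0 x y) (g j)" using C_T xy bij05_le[OF gb ij(2)] unfolding X by simp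
    also have "\<dots> = Tt (g i) (g j)" using rg xy by simp
    finally show ?thesis .
  qed
  have valX: "valency ?X r k = Kt (g k)" if k: "k \<le> 5" for k
  proof -
    have "valency ?X r k = card {z\<in>?X. r 0 z = k}" by (rule valency_at[OF schr]) (simp add: X)
    also have "{z\<in>?X. r 0 z = k} = {z\<in>{0..<16}. r0 0 z = g k \<and> r0 z 0 = g k}"
      using rr0[of 0 _ k] k r0_sym[of 0] unfolding X by auto
    also have "card \<dots> = Kt (g k)" using C_K[of 0 "g k"] bij05_le[OF gb k] unfolding C_def by simp
    finally show ?thesis .
  qed
  define \<sigma>i where "\<sigma>i = inv_into {0..5} \<sigma>"
  define c where "c u v = g (\<sigma>i (r' u v))" for u v
  have \<sigma>i5: "\<And>a. a \<le> 5 \<Longrightarrow> \<sigma>i a \<le> 5" and \<sigma>\<sigma>i: "\<And>a. a \<le> 5 \<Longrightarrow> \<sigma> (\<sigma>i a) = a"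
    using bij05_inv[OF \<sigma>b5] unfolding \<sigma>i_def by auto
  have ceq: "c u v = g k \<longleftrightarrow> r' u v = \<sigma> k" if uv: "u \<in> Y" "v \<in> Y" and k: "k \<le> 5" for u v k
  proof -
    have a: "\<sigma>i (r' u v) \<le> 5" using \<sigma>i5 r'bnd uv by simp
    have "c u v = g k \<longleftrightarrow> \<sigma>i (r' u v) = k" unfolding c_def using bij05_inj[OF gb a k] .
    also have "\<dots> \<longleftrightarrow> r' u v = \<sigma> k" using \<sigma>\<sigma>i[of "r' u v"] r'bnd[OF uv] bij05_inv_f[OF \<sigma>b5 k] unfolding \<sigma>i_def
      by (metis)
    finally show ?thesis .
  qed
  have c1: "\<And>u v. u \<in> Y \<Longrightarrow> v \<in> Y \<Longrightarrow> c u v = 1 \<longleftrightarrow> r' u v = 1" using ceq[of _ _ 1] g1 \<sigma>1 by simp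
  have cbnd: "\<And>u v. u \<in> Y \<Longrightarrow> v \<in> Y \<Longrightarrow> c u v \<le> 5"
    unfolding c_def using bij05_le[OF gb] \<sigma>i5 r'bnd by simp
  have c0: "\<And>u v. u \<in> Y \<Longrightarrow> v \<in> Y \<Longrightarrow> c u v = 0 \<longleftrightarrow> u = v"
    using ceq[of _ _ 0] g0 \<sigma>0 scheme_props(4)[OF schY] by simp
  have csym: "\<And>u v. u \<in> Y \<Longrightarrow> v \<in> Y \<Longrightarrow> c u v = c v u"
    unfolding c_def using scheme_props(5)[OF schY] by simp
  have ccnt: "card {z\<in>Y. c u z = 1 \<and> c z v = j} = Tt (c u v) j" if uv: "u \<in> Y" "v \<in> Y" and j: "j \<le> 5" for u v j
  proof -
    define i where "i = \<sigma>i (r' u v)"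
    have i5: "i \<le> 5" and \<sigma>i_eq: "\<sigma> i = r' u v" using \<sigma>i5 \<sigma>\<sigma>i r'bnd[OF uv] unfolding i_def by auto
    define j' where "j' = inv_into {0..5} g j"
    have j'5: "j' \<le> 5" and gj': "g j' = j" using bij05_inv[OF gb j] unfolding j'_def by auto
    have "{z\<in>Y. c u z = 1 \<and> c z v = j} = {z\<in>Y. r' u z = 1 \<and> r' z v = \<sigma> j'}"
      using c1 ceq[of _ v j'] gj' j'5 uv by auto
    hence "card {z\<in>Y. c u z = 1 \<and> c z v = j} = inter_num Y r' (\<sigma> i) 1 (\<sigma> j')"
      using inter_num_at[OF schY uv \<sigma>i_eq[symmetric]] by simp
    also have "\<dots> = inter_num ?X r i 1 j'" using inn i5 j'5 d5 by simp
    also have "\<dots> = Tt (g i) (g j')" by (rule innX[OF i5 j'5])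
    also have "\<dots> = Tt (c u v) j" unfolding c_def i_def gj' ..
    finally show ?thesis .
  qed
  obtain y0 where y0: "y0 \<in> Y" using scheme_props(3)[OF schY, of 0] by auto
  have cval: "card {z\<in>Y. c y0 z = k} = Kt k" if k: "k \<le> 5" for k
  proof -
    define k' where "k' = inv_into {0..5} g k"
    have k'5: "k' \<le> 5" and gk': "g k' = k" using bij05_inv[OF gb k] unfolding k'_def by auto
    have "{z\<in>Y. c y0 z = k} = {z\<in>Y. r' y0 z = \<sigma> k'}" using ceq[OF y0 _ k'5] gk' by auto
    hence "card {z\<in>Y. c y0 z = k} = valency Y r' (\<sigma> k')" using valency_at[OF schY y0] by simp
    also have "\<dots> = valency ?X r k'" using val k'5 d5 by simp
    also have "\<dots> = Kt k" using valX[OF k'5] gk' by simp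
    finally show ?thesis .
  qed
  interpret Ysch Y c y0
    by unfold_locales (use scheme_props(1)[OF schY] y0 cbnd c0 csym ccnt cval in auto)
  obtain f where fb: "bij_betw f {0..<16} Y" and fe: "\<forall>x<16. \<forall>y<16. c (f x) (f y) = 1 \<longleftrightarrow> r0 x y = 1"
    using recon by blast
  have finj: "inj_on f {0..<16}" and fim: "f ` {0..<16} = Y" using fb unfolding bij_betw_def by auto
  have fY: "\<And>x. x < 16 \<Longrightarrow> f x \<in> Y" using fim by auto
  define s where "s x y = r' (f x) (f y)" for x y
  have sfY: "\<And>x. x \<in> {0..<16} \<Longrightarrow> f x \<in> Y" using fY by simp
  have schs: "assoc_scheme ?X 5 s"
    unfolding assoc_scheme_def X
  proof (intro conjI ballI allI impI)
    show "finite {0..<16::nat}" by simp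
  next
    fix x y assume xy: "x \<in> {0..<16::nat}" "y \<in> {0..<16::nat}"
    show "s x y \<le> 5" unfolding s_def by (rule r'bnd[OF sfY[OF xy(1)] sfY[OF xy(2)]])
    show "s x y = s y x" unfolding s_def by (rule scheme_props(5)[OF schY sfY[OF xy(1)] sfY[OF xy(2)]])
    have "s x y = 0 \<longleftrightarrow> f x = f y" unfolding s_def by (rule scheme_props(4)[OF schY sfY[OF xy(1)] sfY[OF xy(2)]])
    also have "\<dots> \<longleftrightarrow> x = y" by (rule inj_on_eq_iff[OF finj xy])
    finally show "s x y = 0 \<longleftrightarrow> x = y" .
  next
    fix i :: nat assume "i \<le> 5"
    then obtain u v where uv: "u \<in> Y" "v \<in> Y" "r' u v = i" using scheme_props(3)[OF schY] by blast
    have "u \<in> f ` {0..<16}" "v \<in> f ` {0..<16}" using uv fim by simp_all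
    then obtain x y where "x \<in> {0..<16}" "y \<in> {0..<16}" "u = f x" "v = f y" by (elim imageE)
    thus "\<exists>x\<in>{0..<16}. \<exists>y\<in>{0..<16}. s x y = i" unfolding s_def using uv by blast
  next
    fix h i j :: nat and x y x' y' :: nat
    assume "h \<le> 5" "i \<le> 5" "j \<le> 5" and xy: "x \<in> {0..<16}" "y \<in> {0..<16}" "x' \<in> {0..<16}" "y' \<in> {0..<16}"
      and sh: "s x y = h" "s x' y' = h"
    have im: "card {z\<in>{0..<16}. s a z = i \<and> s z b = j} = card {w\<in>Y. r' (f a) w = i \<and> r' w (f b) = j}"
      if ab: "a \<in> {0..<16::nat}" "b \<in> {0..<16::nat}" for a b
    proof -
      have eqim: "f ` {z\<in>{0..<16}. s a z = i \<and> s z b = j} = {w\<in>Y. r' (f a) w = i \<and> r' w (f b) = j}"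
      proof
        show "f ` {z\<in>{0..<16}. s a z = i \<and> s z b = j} \<subseteq> {w\<in>Y. r' (f a) w = i \<and> r' w (f b) = j}"
        proof
          fix w assume "w \<in> f ` {z\<in>{0..<16}. s a z = i \<and> s z b = j}"
          then obtain z where z: "z \<in> {z\<in>{0..<16}. s a z = i \<and> s z b = j}" "w = f z" by (rule imageE)
          have "z \<in> {0..<16}" using z(1) by simp
          hence "f z \<in> Y" by (rule sfY)
          thus "w \<in> {w\<in>Y. r' (f a) w = i \<and> r' w (f b) = j}" using z unfolding s_def by simp
        qed
      next
        show "{w\<in>Y. r' (f a) w = i \<and> r' w (f b) = j} \<subseteq> f ` {z\<in>{0..<16}. s a z = i \<and> s z b = j}"
        proof
          fix w assume w: "w \<in> {w\<in>Y. r' (f a) w = i \<and> r' w (f b) = j}"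
          hence "w \<in> f ` {0..<16}" using fim by simp
          then obtain z where z: "z \<in> {0..<16}" "w = f z" by (rule imageE)
          have "z \<in> {z\<in>{0..<16}. s a z = i \<and> s z b = j}" using w z unfolding s_def by simp
          thus "w \<in> f ` {z\<in>{0..<16}. s a z = i \<and> s z b = j}" using z(2) by (rule rev_image_eqI)
        qed
      qed
      have inj3: "inj_on f {z\<in>{0..<16}. s a z = i \<and> s z b = j}" by (rule inj_on_subset[OF finj]) (rule subsetI, simp)
      have c1: "card (f ` {z\<in>{0..<16}. s a z = i \<and> s z b = j}) = card {z\<in>{0..<16}. s a z = i \<and> s z b = j}"
        by (rule card_image[OF inj3])
      show ?thesis using c1 unfolding eqim by (rule sym)
    qed
    have e: "r' (f x) (f y) = r' (f x') (f y')" using sh unfolding s_def by simp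
    have "card {z\<in>{0..<16}. s x z = i \<and> s z y = j} = card {w\<in>Y. r' (f x) w = i \<and> r' w (f y) = j}"
      by (rule im[OF xy(1,2)])
    also have "\<dots> = card {w\<in>Y. r' (f x') w = i \<and> r' w (f y') = j}"
      by (rule scheme_card_eq[OF schY sfY[OF xy(1)] sfY[OF xy(2)] sfY[OF xy(3)] sfY[OF xy(4)] e])
    also have "\<dots> = card {z\<in>{0..<16}. s x' z = i \<and> s z y' = j}"
      by (rule im[OF xy(3,4), symmetric])
    finally show "card {z\<in>{0..<16}. s x z = i \<and> s z y = j} = card {z\<in>{0..<16}. s x' z = i \<and> s z y' = j}" .
  qed
  have sadj: "\<forall>x\<in>?X. \<forall>y\<in>?X. s x y = 1 \<longleftrightarrow> gp_adj 8 3 x y"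
    unfolding X s_def using c1 fY fe r0_adj by auto
  obtain g' where g'b: "bij_betw g' {0..5} {0..5}" and g'1: "g' 1 = 1"
    and sg: "\<forall>x\<in>?X. \<forall>y\<in>?X. r0 x y = g' (s x y)"
    using factor_r0_bij[OF schs _ sadj] by blast
  define \<tau> where "\<tau> k = inv_into {0..5} g' (g k)" for k
  have \<tau>b: "bij_betw \<tau> {0..5} {0..5}" unfolding \<tau>_def
    using bij_betw_trans[OF gb bij_betw_inv_into[OF g'b]] by (simp add: comp_def)
  have \<tau>1: "\<tau> 1 = 1" unfolding \<tau>_def g1 using bij05_inv_f[OF g'b, of 1] g'1 by simp
  have \<tau>r: "r' (f x) (f y) = \<tau> (r x y)" if xy: "x \<in> ?X" "y \<in> ?X" for x y
  proof -
    have s5: "s x y \<le> 5" using scheme_props(2)[OF schs xy] .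
    have "r' (f x) (f y) = s x y" unfolding s_def ..
    also have "\<dots> = inv_into {0..5} g' (g' (s x y))" using bij05_inv_f[OF g'b s5] by simp
    also have "\<dots> = inv_into {0..5} g' (r0 x y)" using sg xy by simp
    also have "\<dots> = \<tau> (r x y)" unfolding \<tau>_def using rg xy by simp
    finally show ?thesis .
  qed
  have \<tau>r': "\<forall>x\<in>?X. \<forall>y\<in>?X. r' (f x) (f y) = \<tau> (r x y)" using \<tau>r by blast
  have fb': "bij_betw f ?X Y" using fb X by simp
  show ?thesis unfolding scheme_iso_def d5 d'5
    by (intro exI[of _ f] exI[of _ \<tau>] conjI fb' \<tau>b \<tau>1 \<tau>r')
qed

end
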